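(* For $\mu\in M(\mathbb{T})$: $\mu$ is spectrally reasonable if and only if $T_{m}\mu$ is spectrally reasonable for every $m\in\mathbb{Z}$.
   Context: $\mathbb{T}=\mathbb{R}/2\pi\mathbb{Z}$; $M(\mathbb{T})$ is the convolution Banach algebra of complex regular Borel measures on $\mathbb{T}$; $\sigma(\mu)$ is the spectrum in $M(\mathbb{T})$, $\widehat{\mu}(n)=\int e^{-int}d\mu(t)$. $\mathscr{N}$ is the set of $\mu$ with $\sigma(\mu)=\overline{\{\widehat{\mu}(n):n\in\mathbb{Z}\}}$; $\mu$ is spectrally reasonable if $\mu+\nu\in\mathscr{N}$ for every $\nu\in\mathscr{N}$. For $m\in\mathbb{Z}$, $T_m:M(\mathbb{T})\to M(\mathbb{T})$ is defined by $d(T_m\mu)(t)=e^{imt}d\mu(t)$, equivalently $\widehat{T_m\mu}(n)=\widehat{\mu}(n-m)$ for all $n\in\mathbb{Z}$. *)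

theory Defs
  imports "HOL-Analysis.Analysis"
begin

text \<open>The circle T = R/2piZ is modelled by the fundamental domain TT = [0, 2pi),
  with addition modulo 2pi given by tor.  A complex (regular) Borel measure on T is a
  complex-valued countably additive set function on the Borel subsets of TT
  (extended by 0 outside this sigma-algebra).  On the compact metric space T every
  finite Borel measure is regular, so regularity is automatic.\<close>

definition TT :: "real set" where
  "TT = {0..<2*pi}"

definition tor :: "real \<Rightarrow> real" where
  "tor x = x - 2*pi * of_int \<lfloor>x / (2*pi)\<rfloor>"

definition bsetT :: "real set \<Rightarrow> bool" where
  "bsetT E \<longleftrightarrow> E \<in> sets borel \<and> E \<subseteq> TT"

definition cmeas :: "(real set \<Rightarrow> complex) \<Rightarrow> bool" where
  "cmeas \<mu> \<longleftrightarrow> (\<forall>E. \<not> bsetT E \<longrightarrow> \<mu> E = 0) \<and>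
     (\<forall>A :: nat \<Rightarrow> real set. (\<forall>n. bsetT (A n)) \<longrightarrow> disjoint_family A \<longrightarrow>
        (\<lambda>n. \<mu> (A n)) sums \<mu> (\<Union>n. A n))"

text \<open>A representation d mu = h d M with M a finite positive Borel measure on T and
  h in L^1(M) (e.g. M = |mu|, h = d mu / d|mu|), used to define integration against mu.\<close>
definition crep :: "real measure \<Rightarrow> (real \<Rightarrow> complex) \<Rightarrow> (real set \<Rightarrow> complex) \<Rightarrow> bool" where
  "crep M h \<mu> \<longleftrightarrow> sets M = sets borel \<and> finite_measure M \<and> emeasure M (- TT) = 0 \<and>
     integrable M h \<and>
     (\<forall>E. \<mu> E = (if bsetT E then (LINT t:E|M. h t) else 0))"

definition cint :: "(real set \<Rightarrow> complex) \<Rightarrow> (real \<Rightarrow> complex) \<Rightarrow> complex" where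
  "cint \<mu> f = (SOME v. \<exists>M h. crep M h \<mu> \<and> v = (LINT t|M. f t * h t))"

definition conv :: "(real set \<Rightarrow> complex) \<Rightarrow> (real set \<Rightarrow> complex) \<Rightarrow> (real set \<Rightarrow> complex)" where
  "conv \<mu> \<nu> = (\<lambda>E. if bsetT E
      then cint \<nu> (\<lambda>t. \<mu> {s \<in> TT. tor (s + t) \<in> E}) else 0)"

definition delta0 :: "real set \<Rightarrow> complex" where
  "delta0 = (\<lambda>E. if bsetT E \<and> 0 \<in> E then 1 else 0)"

definition cinvertible :: "(real set \<Rightarrow> complex) \<Rightarrow> bool" where
  "cinvertible \<mu> \<longleftrightarrow> (\<exists>\<nu>. cmeas \<nu> \<and> conv \<mu> \<nu> = delta0 \<and> conv \<nu> \<mu> = delta0)"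

definition cspectrum :: "(real set \<Rightarrow> complex) \<Rightarrow> complex set" where
  "cspectrum \<mu> = {z. \<not> cinvertible (\<lambda>E. \<mu> E - z * delta0 E)}"

definition fourier :: "(real set \<Rightarrow> complex) \<Rightarrow> int \<Rightarrow> complex" where
  "fourier \<mu> n = cint \<mu> (\<lambda>t. exp (- \<i> * of_int n * of_real t))"

definition NN :: "(real set \<Rightarrow> complex) set" where
  "NN = {\<mu>. cmeas \<mu> \<and> cspectrum \<mu> = closure (range (fourier \<mu>))}"

definition spec_reasonable :: "(real set \<Rightarrow> complex) \<Rightarrow> bool" where
  "spec_reasonable \<mu> \<longleftrightarrow> cmeas \<mu> \<and> (\<forall>\<nu>\<in>NN. (\<lambda>E. \<mu> E + \<nu> E) \<in> NN)"

definition Tshift :: "int \<Rightarrow> (real set \<Rightarrow> complex) \<Rightarrow> (real set \<Rightarrow> complex)" where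
  "Tshift m \<mu> = (\<lambda>E. if bsetT E
      then cint \<mu> (\<lambda>t. indicator E t * exp (\<i> * of_int m * of_real t)) else 0)"

end

theory Submission
  imports Defs "HOL-Probability.Giry_Monad"
begin


definition bb :: "(real \<Rightarrow> complex) \<Rightarrow> bool" where
  "bb f \<longleftrightarrow> f \<in> borel_measurable borel \<and> (\<exists>C. \<forall>x. norm (f x) \<le> C)"

lemma bb_add: "bb f \<Longrightarrow> bb g \<Longrightarrow> bb (\<lambda>x. f x + g x)"
  unfolding bb_def
  apply (auto)
  subgoal for C D by (rule exI[of _ "C + D"]) (meson add_mono norm_triangle_le)
  done

lemma bb_scal: "bb f \<Longrightarrow> bb (\<lambda>x. c * f x)"
  unfolding bb_def
  apply (auto)
  subgoal for C by (rule exI[of _ "norm c * C"]) (simp add: mult_left_mono norm_mult)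
  done

lemma bb_ind: "A \<in> sets borel \<Longrightarrow> bb (indicator A :: real \<Rightarrow> complex)"
  unfolding bb_def by (auto intro!: exI[of _ 1] simp: indicator_def)

lemma phi_zero:
  fixes \<Phi> :: "(real \<Rightarrow> complex) \<Rightarrow> complex"
  assumes add: "\<And>f g. bb f \<Longrightarrow> bb g \<Longrightarrow> \<Phi> (\<lambda>x. f x + g x) = \<Phi> f + \<Phi> g"
    and scal: "\<And>c f. bb f \<Longrightarrow> \<Phi> (\<lambda>x. c * f x) = c * \<Phi> f"
    and ind: "\<And>A. A \<in> sets borel \<Longrightarrow> \<Phi> (indicator A) = 0"
    and bnd: "\<And>f C. bb f \<Longrightarrow> (\<forall>x. norm (f x) \<le> C) \<Longrightarrow> norm (\<Phi> f) \<le> K * C"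
    and f: "bb f"
  shows "\<Phi> f = 0"
proof -
  have fin: "\<Phi> (\<lambda>x. \<Sum>c\<in>S. c * indicator (A c) x) = 0 \<and> bb (\<lambda>x. \<Sum>c\<in>S. c * indicator (A c) x)"
    if "finite S" "\<And>c. A c \<in> sets borel" for S A
    using that(1)
  proof (induction S rule: finite_induct)
    case empty
    have z: "bb (\<lambda>x. 0)" by (auto simp add: bb_def)
    have "\<Phi> (\<lambda>x. 0) = 0" using scal[OF z, of 0] by simp
    then show ?case using z by simp
  next
    case (insert c S)
    have b1: "bb (\<lambda>x. c * indicator (A c) x)" by (rule bb_scal[OF bb_ind[OF that(2)]])
    have "\<Phi> (\<lambda>x. c * indicator (A c) x) = 0" using scal[OF bb_ind[OF that(2)], of c] ind[OF that(2)] by simp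
    moreover have eq: "(\<lambda>x. \<Sum>c\<in>insert c S. c * indicator (A c) x) = (\<lambda>x. c * indicator (A c) x + (\<Sum>c\<in>S. c * indicator (A c) x))"
      by (rule ext, rule sum.insert[OF insert(1,2)])
    ultimately show ?case unfolding eq using insert add[OF b1, of "\<lambda>x. \<Sum>c\<in>S. c * indicator (A c) x"] bb_add[OF b1]
      by auto
  qed
  obtain C where C: "\<And>x. norm (f x) \<le> C" and fm: "f \<in> borel_measurable borel" using f unfolding bb_def by auto
  have main: "norm (\<Phi> f) \<le> K * (2 / real (Suc n))" for n
  proof -
    define N where "N = real (Suc n)"
    have N: "N \<ge> 1" by (simp add: N_def)
    define g where "g x = (of_int \<lfloor>N * Re (f x)\<rfloor> + \<i> * of_int \<lfloor>N * Im (f x)\<rfloor>) / complex_of_real N" for x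
    have gm: "g \<in> borel_measurable borel" unfolding g_def using fm by measurable
    define S where "S = (\<lambda>(a,b). (of_int a + \<i> * of_int b) / complex_of_real N) ` ({-\<lceil>N*C\<rceil>-1..\<lceil>N*C\<rceil>+1} \<times> {-\<lceil>N*C\<rceil>-1..\<lceil>N*C\<rceil>+1})"
    have finS: "finite S" unfolding S_def by simp
    have gS: "g x \<in> S" for x
    proof -
      have r: "\<bar>Re (f x)\<bar> \<le> C" "\<bar>Im (f x)\<bar> \<le> C" using C[of x] abs_Re_le_cmod abs_Im_le_cmod order_trans by blast+
      have b: "\<bar>N * Re (f x)\<bar> \<le> N * C" "\<bar>N * Im (f x)\<bar> \<le> N * C"
        using r N by (auto simp: abs_mult intro: mult_left_mono)
      have "\<lfloor>N * Re (f x)\<rfloor> \<in> {-\<lceil>N*C\<rceil>-1..\<lceil>N*C\<rceil>+1}" "\<lfloor>N * Im (f x)\<rfloor> \<in> {-\<lceil>N*C\<rceil>-1..\<lceil>N*C\<rceil>+1}"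
      proof -
        have "\<And>y. \<bar>y\<bar> \<le> N * C \<Longrightarrow> \<lfloor>y\<rfloor> \<in> {-\<lceil>N*C\<rceil>-1..\<lceil>N*C\<rceil>+1}"
        proof -
          fix y :: real assume "\<bar>y\<bar> \<le> N * C"
          then have "-(N*C) \<le> y" "y \<le> N*C" by linarith+
          then have "\<lfloor>y\<rfloor> \<le> \<lceil>N*C\<rceil>" "-\<lceil>N*C\<rceil> - 1 \<le> \<lfloor>y\<rfloor>"
            by (meson floor_le_ceiling floor_mono order_trans, linarith)
          then show "\<lfloor>y\<rfloor> \<in> {-\<lceil>N*C\<rceil>-1..\<lceil>N*C\<rceil>+1}" by simp
        qed
        then show "\<lfloor>N * Re (f x)\<rfloor> \<in> {-\<lceil>N*C\<rceil>-1..\<lceil>N*C\<rceil>+1}" "\<lfloor>N * Im (f x)\<rfloor> \<in> {-\<lceil>N*C\<rceil>-1..\<lceil>N*C\<rceil>+1}"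
          using b by blast+
      qed
      then show ?thesis unfolding S_def g_def
        by (intro image_eqI[of _ _ "(\<lfloor>N * Re (f x)\<rfloor>, \<lfloor>N * Im (f x)\<rfloor>)"]) auto
    qed
    have geq: "g = (\<lambda>x. \<Sum>c\<in>S. c * indicator (g -` {c}) x)"
    proof
      fix x
      have "(\<Sum>c\<in>S. c * indicator (g -` {c}) x) = (\<Sum>c\<in>S. if c = g x then g x else 0)"
        by (rule sum.cong) (auto simp: indicator_def)
      also have "\<dots> = g x" using finS gS[of x] by (simp add: sum.delta')
      finally show "g x = (\<Sum>c\<in>S. c * indicator (g -` {c}) x)" by simp
    qed
    have pre: "g -` {c} \<in> sets borel" for c
      using measurable_sets_borel[OF gm borel_closed[OF closed_singleton]] by simp
    have g0: "\<Phi> g = 0" and gbb: "bb g"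
      using fin[OF finS pre, of "\<lambda>c. c"] unfolding geq[symmetric] by auto
    have dist: "norm (f x + (-1) * g x) \<le> 2 / N" for x
    proof -
      have "norm (f x - g x) \<le> \<bar>Re (f x - g x)\<bar> + \<bar>Im (f x - g x)\<bar>" by (rule cmod_le)
      moreover have "Re (g x) = of_int \<lfloor>N * Re (f x)\<rfloor> / N" "Im (g x) = of_int \<lfloor>N * Im (f x)\<rfloor> / N"
        unfolding g_def using N by (simp_all add: Re_divide_of_real Im_divide_of_real)
      moreover have "\<bar>Re (f x) - of_int \<lfloor>N * Re (f x)\<rfloor> / N\<bar> \<le> 1 / N" "\<bar>Im (f x) - of_int \<lfloor>N * Im (f x)\<rfloor> / N\<bar> \<le> 1 / N"
      proof -
        have "\<And>y. \<bar>y - of_int \<lfloor>N * y\<rfloor> / N\<bar> \<le> 1 / N"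
        proof -
          fix y
          have "of_int \<lfloor>N * y\<rfloor> \<le> N * y" "N * y < of_int \<lfloor>N * y\<rfloor> + 1" by linarith+
          then have "of_int \<lfloor>N * y\<rfloor> / N \<le> y" "y < (of_int \<lfloor>N * y\<rfloor> + 1) / N" using N
            by (simp_all add: divide_simps mult.commute)
          then show "\<bar>y - of_int \<lfloor>N * y\<rfloor> / N\<bar> \<le> 1 / N" by (simp add: add_divide_distrib)
        qed
        then show "\<bar>Re (f x) - of_int \<lfloor>N * Re (f x)\<rfloor> / N\<bar> \<le> 1 / N" "\<bar>Im (f x) - of_int \<lfloor>N * Im (f x)\<rfloor> / N\<bar> \<le> 1 / N" by auto
      qed
      ultimately show ?thesis by simp
    qed
    have d: "bb (\<lambda>x. f x + (-1) * g x)" by (rule bb_add[OF f bb_scal[OF gbb]])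
    have "\<Phi> f = \<Phi> (\<lambda>x. (f x + (-1) * g x) + g x)" by simp
    also have "\<dots> = \<Phi> (\<lambda>x. f x + (-1) * g x)" using add[OF d gbb] g0 by simp
    finally show ?thesis using bnd[OF d, of "2/N"] dist N_def by auto
  qed
  show ?thesis
  proof (rule ccontr)
    assume ne: "\<Phi> f \<noteq> 0"
    then have K: "K > 0" using main[of 0] by simp (smt (verit) norm_ge_zero zero_less_norm_iff)
    obtain n0 where n0: "real n0 > 2 * K / norm (\<Phi> f)" using reals_Archimedean2 by blast
    define n where "n = n0"
    have n: "real (Suc n) > 2 * K / norm (\<Phi> f)" using n0 unfolding n_def by simp
    have "norm (\<Phi> f) * real (Suc n) > 2 * K" using n ne by (simp add: divide_less_eq mult.commute)
    moreover have "norm (\<Phi> f) * real (Suc n) \<le> 2 * K" using main[of n] by (simp add: field_simps)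
    ultimately show False by simp
  qed
qed



definition ci :: "real measure \<Rightarrow> (real \<Rightarrow> complex) \<Rightarrow> (real \<Rightarrow> complex) \<Rightarrow> complex" where
  "ci M h f = (LINT t|M. f t * h t)"

lemma crep_space: "crep M h \<mu> \<Longrightarrow> space M = UNIV"
  unfolding crep_def by (metis sets_eq_imp_space_eq space_borel)

lemma crep_meas: "crep M h \<mu> \<Longrightarrow> h \<in> borel_measurable borel"
  unfolding crep_def by (metis borel_measurable_integrable measurable_cong_sets)

lemma bb_meas_M: "sets M = sets borel \<Longrightarrow> bb f \<Longrightarrow> f \<in> borel_measurable M"
  unfolding bb_def by (metis measurable_cong_sets)

lemma int_bh:
  assumes "crep M h \<mu>" "bb f"
  shows "integrable M (\<lambda>x. f x * h x)"
proof -
  obtain C where C: "\<And>x. norm (f x) \<le> C" using assms(2) unfolding bb_def by auto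
  have s: "sets M = sets borel" and i: "integrable M h" using assms(1) unfolding crep_def by auto
  have hm: "h \<in> borel_measurable M" using i by auto
  have fm: "f \<in> borel_measurable M" using bb_meas_M[OF s assms(2)] .
  show ?thesis
  proof -
    have i1: "integrable M (\<lambda>x. complex_of_real C * h x)" using i by simp
    have m1: "(\<lambda>x. f x * h x) \<in> borel_measurable M" using hm fm by measurable
    have "norm (f x * h x) \<le> norm (complex_of_real C * h x)" for x
    proof -
      have "C \<ge> 0" using C[of x] norm_ge_zero order_trans by blast
      then show ?thesis using C[of x] by (simp add: norm_mult mult_right_mono)
    qed
    then have "AE x in M. norm (f x * h x) \<le> norm (complex_of_real C * h x)" by simp
    then show ?thesis using Bochner_Integration.integrable_bound[OF i1 m1] by blast
  qed
qed

lemma ci_bound: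
  assumes "crep M h \<mu>" "bb f" "\<And>x. norm (f x) \<le> C"
  shows "norm (ci M h f) \<le> C * (LINT t|M. norm (h t))"
proof -
  have i: "integrable M h" using assms(1) unfolding crep_def by auto
  have "norm (ci M h f) \<le> (LINT t|M. norm (f t * h t))"
    unfolding ci_def by (rule integral_norm_bound)
  also have "\<dots> \<le> (LINT t|M. C * norm (h t))"
    using integrable_norm[OF int_bh[OF assms(1,2)]] i
    by (intro integral_mono) (auto simp: norm_mult intro!: mult_right_mono assms(3))
  also have "\<dots> = C * (LINT t|M. norm (h t))" by simp
  finally show ?thesis .
qed

lemma ci_add:
  assumes "crep M h \<mu>" "bb f" "bb g"
  shows "ci M h (\<lambda>x. f x + g x) = ci M h f + ci M h g"
  unfolding ci_def using int_bh[OF assms(1,2)] int_bh[OF assms(1,3)]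
  by (simp add: distrib_right)

lemma ci_scal:
  assumes "crep M h \<mu>"
  shows "ci M h (\<lambda>x. c * f x) = c * ci M h f"
  unfolding ci_def by (simp add: mult.assoc)

lemma ci_ind:
  assumes "crep M h \<mu>" "A \<in> sets borel"
  shows "ci M h (indicator A) = \<mu> (A \<inter> TT)"
proof -
  have s: "sets M = sets borel" and n: "emeasure M (- TT) = 0"
    and e: "\<And>E. \<mu> E = (if bsetT E then (LINT t:E|M. h t) else 0)" using assms(1) unfolding crep_def by auto
  have TT: "TT \<in> sets borel" unfolding TT_def by simp
  have b: "bsetT (A \<inter> TT)" unfolding bsetT_def using assms(2) TT by auto
  have ae: "AE x in M. x \<in> TT"
    using n s TT by (intro AE_I[of _ _ "- TT"]) (auto simp: crep_space[OF assms(1)])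
  have hM: "h \<in> borel_measurable M" using assms(1) unfolding crep_def by auto
  have AM: "A \<in> sets M" "TT \<in> sets M" using s assms(2) TT by auto
  have "ci M h (indicator A) = (LINT t|M. indicator (A \<inter> TT) t *\<^sub>R h t)"
    unfolding ci_def
  proof (rule integral_cong_AE)
    show "(\<lambda>t. indicator A t * h t) \<in> borel_measurable M" using hM AM by measurable
    show "(\<lambda>t. indicator (A \<inter> TT) t *\<^sub>R h t) \<in> borel_measurable M" using hM AM by measurable
    show "AE x in M. indicator A x * h x = indicator (A \<inter> TT) x *\<^sub>R h x"
      using ae by eventually_elim (auto simp: indicator_def)
  qed
  also have "\<dots> = \<mu> (A \<inter> TT)" using e[of "A \<inter> TT"] b by (simp add: set_lebesgue_integral_def)
  finally show ?thesis .
qed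

lemma crep_unique_lin:
  assumes r1: "crep M1 h1 \<mu>1" and r2: "crep M2 h2 \<mu>2" and r3: "crep M3 h3 \<mu>3"
    and lin: "\<And>E. \<mu>3 E = \<mu>1 E + c * \<mu>2 E" and f: "bb f"
  shows "ci M3 h3 f = ci M1 h1 f + c * ci M2 h2 f"
proof -
  define \<Phi> where "\<Phi> f = ci M3 h3 f - ci M1 h1 f - c * ci M2 h2 f" for f
  define K where "K = (LINT t|M3. norm (h3 t)) + (LINT t|M1. norm (h1 t)) + norm c * (LINT t|M2. norm (h2 t))"
  have "\<Phi> f = 0"
  proof (rule phi_zero[where \<Phi>=\<Phi> and K=K])
    fix f g assume "bb f" "bb g"
    then show "\<Phi> (\<lambda>x. f x + g x) = \<Phi> f + \<Phi> g" unfolding \<Phi>_def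
      using ci_add[OF r1] ci_add[OF r2] ci_add[OF r3] by (simp add: algebra_simps)
  next
    fix c' f assume "bb f" show "\<Phi> (\<lambda>x. c' * f x) = c' * \<Phi> f" unfolding \<Phi>_def
      using ci_scal[OF r1] ci_scal[OF r2] ci_scal[OF r3] by (simp add: algebra_simps)
  next
    fix A :: "real set" assume "A \<in> sets borel"
    then show "\<Phi> (indicator A) = 0" unfolding \<Phi>_def using ci_ind[OF r1] ci_ind[OF r2] ci_ind[OF r3] lin by simp
  next
    fix f C assume b: "bb f" "\<forall>x. norm (f x) \<le> C"
    have "norm (\<Phi> f) \<le> norm (ci M3 h3 f) + norm (ci M1 h1 f) + norm c * norm (ci M2 h2 f)"
      unfolding \<Phi>_def by (metis (no_types, opaque_lifting) norm_mult norm_triangle_ineq4 add_mono order_trans norm_triangle_ineq4 order_refl)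
    also have "\<dots> \<le> C * (LINT t|M3. norm (h3 t)) + C * (LINT t|M1. norm (h1 t)) + norm c * (C * (LINT t|M2. norm (h2 t)))"
      using ci_bound[OF r1 b(1)] ci_bound[OF r2 b(1)] ci_bound[OF r3 b(1)] b(2)
      by (intro add_mono mult_left_mono) auto
    also have "\<dots> = K * C" unfolding K_def by (simp add: algebra_simps)
    finally show "norm (\<Phi> f) \<le> K * C" .
  qed (fact f)
  then have "ci M3 h3 f - (ci M1 h1 f + c * ci M2 h2 f) = 0" unfolding \<Phi>_def by (simp only: diff_diff_eq)
  then show ?thesis by (simp only: right_minus_eq)
qed

lemma cint_rep:
  assumes r: "crep M h \<mu>" and f: "bb f"
  shows "cint \<mu> f = ci M h f"
proof -
  have "\<exists>v. \<exists>M h. crep M h \<mu> \<and> v = (LINT t|M. f t * h t)" using r by blast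
  then have "\<exists>M h. crep M h \<mu> \<and> cint \<mu> f = (LINT t|M. f t * h t)"
    unfolding cint_def by (rule someI_ex)
  then obtain M' h' where r': "crep M' h' \<mu>" and c: "cint \<mu> f = ci M' h' f"
    unfolding ci_def by blast
  have "ci M' h' f = ci M h f + 0 * ci M h f"
    by (rule crep_unique_lin[OF r r r' _ f]) simp
  then show ?thesis using c by simp
qed



lemma ci_dc:
  assumes r: "crep M h \<mu>" and fb: "\<And>n. bb (F n)" and f: "bb g"
    and lim: "\<And>x. (\<lambda>n. F n x) \<longlonglongrightarrow> g x" and bnd: "\<And>n x. norm (F n x) \<le> C"
  shows "(\<lambda>n. ci M h (F n)) \<longlonglongrightarrow> ci M h g"
proof -
  have s: "sets M = sets borel" and i: "integrable M h" using r unfolding crep_def by auto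
  have hm: "h \<in> borel_measurable M" using i by auto
  have Fm: "F n \<in> borel_measurable M" for n using bb_meas_M[OF s fb] .
  have gm: "g \<in> borel_measurable M" using bb_meas_M[OF s f] .
  show ?thesis unfolding ci_def
  proof (rule integral_dominated_convergence[where w="\<lambda>x. C * norm (h x)"])
    show "(\<lambda>t. g t * h t) \<in> borel_measurable M" using gm hm by measurable
    show "(\<lambda>t. F n t * h t) \<in> borel_measurable M" for n using Fm hm by measurable
    show "integrable M (\<lambda>x. C * norm (h x))" using i by auto
    show "AE x in M. (\<lambda>n. F n x * h x) \<longlonglongrightarrow> g x * h x" using lim by (auto intro!: tendsto_mult)
    show "AE x in M. norm (F n x * h x) \<le> C * norm (h x)" for n
      using bnd by (auto simp: norm_mult intro!: mult_right_mono)
  qed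
qed

lemma ci_sum:
  assumes r: "crep M h \<mu>" and "finite I" and "\<And>i. i \<in> I \<Longrightarrow> bb (f i)"
  shows "ci M h (\<lambda>x. \<Sum>i\<in>I. f i x) = (\<Sum>i\<in>I. ci M h (f i))"
  unfolding ci_def using int_bh[OF r assms(3)] by (simp add: sum_distrib_right integral_sum)

lemma indicator_disj_lessThan:
  fixes n :: nat
  assumes "disjoint_family A"
  shows "(indicator (\<Union>i<n. A i) x :: complex) = (\<Sum>i<n. indicator (A i) x)"
proof (induction n)
  case (Suc n)
  have d0: "x \<in> A n \<Longrightarrow> i < n \<Longrightarrow> x \<notin> A i" for i
    using assms[unfolded disjoint_family_on_def, rule_format, of i n] by auto
  have d: "x \<in> A n \<Longrightarrow> x \<notin> (\<Union>i<n. A i)" using d0 by blast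
  have "(\<Union>i<Suc n. A i) = A n \<union> (\<Union>i<n. A i)" by (auto simp: lessThan_Suc)
  then have e: "indicator (\<Union>i<Suc n. A i) x = (indicator (A n) x :: complex) + indicator (\<Union>i<n. A i) x"
    using d by (auto simp: indicator_def)
  show ?case by (simp only: e Suc.IH sum.lessThan_Suc add.commute)
qed simp

lemma crep_cmeas:
  assumes r: "crep M h \<mu>"
  shows "cmeas \<mu>"
  unfolding cmeas_def
proof (intro conjI allI impI)
  fix E assume "\<not> bsetT E" then show "\<mu> E = 0" using r unfolding crep_def by auto
next
  fix A :: "nat \<Rightarrow> real set" assume A: "\<forall>n. bsetT (A n)" and d: "disjoint_family A"
  have As: "A n \<in> sets borel" "A n \<subseteq> TT" for n using A unfolding bsetT_def by auto
  have U: "(\<Union>i<n. A i) \<in> sets borel" for n using As by auto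
  have muA: "\<mu> (A i) = ci M h (indicator (A i))" for i using ci_ind[OF r As(1)] As(2)[of i] by (simp add: Int_absorb2)
  have "(\<lambda>n. ci M h (indicator (\<Union>i<n. A i))) \<longlonglongrightarrow> ci M h (indicator (\<Union>n. A n))"
  proof (rule ci_dc[OF r, where C=1])
    show "bb (indicator (\<Union>i<n. A i))" for n using bb_ind[OF U] .
    show "bb (indicator (\<Union>n. A n))" using As by (intro bb_ind) auto
    show "norm (indicator (\<Union>i<n. A i) x :: complex) \<le> 1" for n x by (simp add: indicator_def)
    fix x
    show "(\<lambda>n. indicator (\<Union>i<n. A i) x :: complex) \<longlonglongrightarrow> indicator (\<Union>n. A n) x"
    proof (cases "x \<in> (\<Union>n. A n)")
      case True
      then obtain k where k: "x \<in> A k" by auto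
      have "\<forall>n\<ge>Suc k. (indicator (\<Union>i<n. A i) x :: complex) = indicator (\<Union>n. A n) x"
        using k True by (auto simp: indicator_def)
      then show ?thesis by (intro tendsto_eventually) (auto simp: eventually_sequentially)
    next
      case False then show ?thesis by (auto simp: indicator_def)
    qed
  qed
  moreover have "ci M h (indicator (\<Union>i<n. A i)) = (\<Sum>i<n. \<mu> (A i))" for n
  proof -
    have "ci M h (indicator (\<Union>i<n. A i)) = ci M h (\<lambda>x. \<Sum>i<n. indicator (A i) x)"
      using indicator_disj_lessThan[OF d] by presburger
    also have "\<dots> = (\<Sum>i<n. ci M h (indicator (A i)))" by (rule ci_sum[OF r]) (auto intro: bb_ind As)
    finally show ?thesis using muA by simp
  qed
  moreover have "\<mu> (\<Union>n. A n) = ci M h (indicator (\<Union>n. A n))"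
  proof -
    have "(\<Union>n. A n) \<inter> TT = (\<Union>n. A n)" using As(2) by blast
    then show ?thesis using ci_ind[OF r, of "\<Union>n. A n"] As(1) by auto
  qed
  ultimately show "(\<lambda>n. \<mu> (A n)) sums \<mu> (\<Union>n. A n)" unfolding sums_def by simp
qed



lemma bsetT_Un: "bsetT A \<Longrightarrow> bsetT B \<Longrightarrow> bsetT (A \<union> B)" unfolding bsetT_def by auto
lemma bsetT_Int: "bsetT A \<Longrightarrow> B \<in> sets borel \<Longrightarrow> bsetT (A \<inter> B)" unfolding bsetT_def by auto
lemma bsetT_Diff: "bsetT A \<Longrightarrow> B \<in> sets borel \<Longrightarrow> bsetT (A - B)" unfolding bsetT_def by auto
lemma bsetT_borel: "bsetT A \<Longrightarrow> A \<in> sets borel" unfolding bsetT_def by auto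
lemma bsetT_empty: "bsetT {}" unfolding bsetT_def by auto
lemma TT_borel: "TT \<in> sets borel" unfolding TT_def by simp
lemma bsetT_TT: "bsetT TT" unfolding bsetT_def using TT_borel by auto
lemma bsetT_UN: "(\<And>n::nat. bsetT (A n)) \<Longrightarrow> bsetT (\<Union>n. A n)" unfolding bsetT_def by auto
lemma bsetT_INT: "(\<And>n::nat. bsetT (A n)) \<Longrightarrow> bsetT (\<Inter>n. A n)" unfolding bsetT_def by auto
lemma bsetT_sub: "bsetT A \<Longrightarrow> B \<in> sets borel \<Longrightarrow> B \<subseteq> A \<Longrightarrow> bsetT B" unfolding bsetT_def by auto

locale rca =
  fixes \<rho> :: "real set \<Rightarrow> real"
  assumes zero: "\<And>E. \<not> bsetT E \<Longrightarrow> \<rho> E = 0"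
    and ca: "\<And>A. (\<And>n. bsetT (A n)) \<Longrightarrow> disjoint_family A \<Longrightarrow> (\<lambda>n. \<rho> (A n)) sums \<rho> (\<Union>n. A n)"
begin

lemma empty: "\<rho> {} = 0"
proof -
  have "(\<lambda>n. \<rho> {}) sums \<rho> (\<Union>n::nat. {})" by (rule ca) (auto simp: bsetT_empty disjoint_family_on_def)
  then have "summable (\<lambda>n::nat. \<rho> {})" by (rule sums_summable)
  then have "(\<lambda>n::nat. \<rho> {}) \<longlonglongrightarrow> 0" by (rule summable_LIMSEQ_zero)
  then show ?thesis by (simp add: LIMSEQ_const_iff)
qed

lemma add: assumes "bsetT A" "bsetT B" "A \<inter> B = {}" shows "\<rho> (A \<union> B) = \<rho> A + \<rho> B"
proof -
  define F where "F n = (if n = 0 then A else if n = 1 then B else {})" for n :: nat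
  have "(\<lambda>n. \<rho> (F n)) sums \<rho> (\<Union>n. F n)"
    by (rule ca) (use assms in \<open>auto simp: F_def bsetT_empty disjoint_family_on_def\<close>)
  moreover have "(\<Union>n. F n) = A \<union> B" unfolding F_def by (auto split: if_splits)
  moreover have "(\<lambda>n. \<rho> (F n)) sums (\<Sum>n<2. \<rho> (F n))"
    by (rule sums_finite) (auto simp: F_def empty)
  ultimately show ?thesis using sums_unique2 by (fastforce simp: F_def numeral_2_eq_2)
qed

lemma diff: assumes "bsetT A" "bsetT B" "B \<subseteq> A" shows "\<rho> (A - B) = \<rho> A - \<rho> B"
proof -
  have "A = (A - B) \<union> B" using assms(3) by auto
  then have "\<rho> A = \<rho> (A - B) + \<rho> B" using add[of "A - B" B] assms bsetT_Diff bsetT_borel by (metis Diff_disjoint inf_commute)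
  then show ?thesis by simp
qed

lemma fin_add:
  fixes n :: nat
  assumes "\<And>i. bsetT (A i)" "disjoint_family A"
  shows "\<rho> (\<Union>i<n. A i) = (\<Sum>i<n. \<rho> (A i))"
proof (induction n)
  case 0 then show ?case by (simp add: empty)
next
  case (Suc n)
  have b: "bsetT (\<Union>i<n. A i)" using assms(1) unfolding bsetT_def by auto
  have d0: "i < n \<Longrightarrow> A n \<inter> A i = {}" for i
    using assms(2)[unfolded disjoint_family_on_def, rule_format, of n i] by auto
  have d: "A n \<inter> (\<Union>i<n. A i) = {}" using d0 by blast
  have "(\<Union>i<Suc n. A i) = A n \<union> (\<Union>i<n. A i)" by (auto simp: lessThan_Suc)
  then show ?case using add[OF assms(1)[of n] b d] Suc by simp
qed

lemma cont_below:
  assumes B: "\<And>n. bsetT (B n)" and inc: "incseq B"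
  shows "(\<lambda>n. \<rho> (B n)) \<longlonglongrightarrow> \<rho> (\<Union>n. B n)"
proof -
  have db: "bsetT (disjointed B n)" for n
  proof -
    have "(\<Union>i\<in>{0..<n}. B i) \<in> sets borel" using B bsetT_borel by auto
    then show ?thesis unfolding disjointed_def using bsetT_Diff[OF B] by auto
  qed
  have "(\<lambda>n. \<rho> (disjointed B n)) sums \<rho> (\<Union>n. disjointed B n)"
    by (rule ca[OF db disjoint_family_disjointed])
  then have "(\<lambda>n. \<Sum>i<n. \<rho> (disjointed B i)) \<longlonglongrightarrow> \<rho> (\<Union>n. B n)"
    unfolding sums_def UN_disjointed_eq .
  moreover have "(\<Sum>i<Suc n. \<rho> (disjointed B i)) = \<rho> (B n)" for n
  proof -
    have "(\<Sum>i<Suc n. \<rho> (disjointed B i)) = \<rho> (\<Union>i<Suc n. disjointed B i)"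
      using fin_add[OF db disjoint_family_disjointed] by simp
    also have "(\<Union>i<Suc n. disjointed B i) = (\<Union>i<Suc n. B i)"
      using finite_UN_disjointed_eq[of B "Suc n"] by (simp add: atLeast0LessThan)
    also have "\<dots> = B n" using inc by (auto simp: incseq_def lessThan_Suc_atMost)
    finally show ?thesis .
  qed
  ultimately show ?thesis using LIMSEQ_Suc[of "\<lambda>n. \<Sum>i<n. \<rho> (disjointed B i)"] by simp
qed

lemma cont_above:
  assumes C: "\<And>n. bsetT (C n)" and dec: "decseq C"
  shows "(\<lambda>n. \<rho> (C n)) \<longlonglongrightarrow> \<rho> (\<Inter>n. C n)"
proof -
  define B where "B n = C 0 - C n" for n
  have Bb: "bsetT (B n)" for n unfolding B_def using C bsetT_Diff bsetT_borel by blast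
  have inc: "incseq B" using dec unfolding B_def incseq_def decseq_def by auto
  have lim: "(\<lambda>n. \<rho> (B n)) \<longlonglongrightarrow> \<rho> (\<Union>n. B n)" by (rule cont_below[OF Bb inc])
  have U: "(\<Union>n. B n) = C 0 - (\<Inter>n. C n)" unfolding B_def by auto
  have I: "(\<Inter>n. C n) \<subseteq> C 0" by auto
  have "\<rho> (B n) = \<rho> (C 0) - \<rho> (C n)" for n
    unfolding B_def using diff[OF C C] dec by (simp add: decseq_def)
  moreover have "\<rho> (\<Union>n. B n) = \<rho> (C 0) - \<rho> (\<Inter>n. C n)"
    unfolding U by (rule diff[OF C bsetT_INT[OF C] I])
  ultimately have "(\<lambda>n. \<rho> (C 0) - \<rho> (C n)) \<longlonglongrightarrow> \<rho> (C 0) - \<rho> (\<Inter>n. C n)" using lim by simp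
  from tendsto_diff[OF tendsto_const[of "\<rho> (C 0)"] this] show ?thesis by simp
qed

definition bad :: "real set \<Rightarrow> bool" where
  "bad E \<longleftrightarrow> bsetT E \<and> (\<forall>b. \<exists>F. bsetT F \<and> F \<subseteq> E \<and> \<bar>\<rho> F\<bar> > b)"

lemma bad_step:
  assumes "bad E"
  shows "\<exists>A E'. bsetT A \<and> bad E' \<and> A \<subseteq> E \<and> E' \<subseteq> E \<and> A \<inter> E' = {} \<and> \<bar>\<rho> A\<bar> \<ge> 1"
proof -
  have E: "bsetT E" using assms unfolding bad_def by auto
  obtain F where F: "bsetT F" "F \<subseteq> E" "\<bar>\<rho> F\<bar> > \<bar>\<rho> E\<bar> + 1" using assms unfolding bad_def by blast
  define G where "G = E - F"
  have G: "bsetT G" unfolding G_def using bsetT_Diff[OF E bsetT_borel[OF F(1)]] .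
  have "\<rho> G = \<rho> E - \<rho> F" unfolding G_def by (rule diff[OF E F(1,2)])
  then have G1: "\<bar>\<rho> G\<bar> \<ge> 1" using F(3) by linarith
  have F1: "\<bar>\<rho> F\<bar> \<ge> 1" using F(3) by linarith
  have "bad F \<or> bad G"
  proof (rule ccontr)
    assume "\<not> (bad F \<or> bad G)"
    then obtain bF bG where bF: "\<And>H. bsetT H \<Longrightarrow> H \<subseteq> F \<Longrightarrow> \<bar>\<rho> H\<bar> \<le> bF"
      and bG: "\<And>H. bsetT H \<Longrightarrow> H \<subseteq> G \<Longrightarrow> \<bar>\<rho> H\<bar> \<le> bG"
      using F(1) G unfolding bad_def by (meson not_le)
    have "\<bar>\<rho> H\<bar> \<le> bF + bG" if H: "bsetT H" "H \<subseteq> E" for H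
    proof -
      have h1: "bsetT (H \<inter> F)" "bsetT (H - F)" using H(1) F(1) bsetT_Int bsetT_Diff bsetT_borel by blast+
      have "H = (H \<inter> F) \<union> (H - F)" by auto
      then have "\<rho> H = \<rho> (H \<inter> F) + \<rho> (H - F)" using add[OF h1] by (metis Diff_disjoint inf_assoc inf_bot_right inf_commute Int_Diff)
      moreover have "\<bar>\<rho> (H \<inter> F)\<bar> \<le> bF" using bF[OF h1(1)] by auto
      moreover have "\<bar>\<rho> (H - F)\<bar> \<le> bG" using bG[OF h1(2)] H(2) unfolding G_def by auto
      ultimately show ?thesis by linarith
    qed
    then show False using assms unfolding bad_def by (meson not_le)
  qed
  moreover have GE: "G \<subseteq> E" "F \<inter> G = {}" "G \<inter> F = {}" unfolding G_def by auto
  ultimately show ?thesis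
  proof (elim disjE)
    assume "bad F" then show ?thesis using G G1 F(2) GE by (intro exI[of _ G] exI[of _ F]) auto
  next
    assume "bad G" then show ?thesis using F F1 GE by (intro exI[of _ F] exI[of _ G]) auto
  qed
qed

lemma not_bad_TT: "\<not> bad TT"
proof
  assume b0: "bad TT"
  have "\<forall>E. \<exists>p. bad E \<longrightarrow> (bsetT (fst p) \<and> bad (snd p) \<and> fst p \<subseteq> E \<and> snd p \<subseteq> E \<and> fst p \<inter> snd p = {} \<and> \<bar>\<rho> (fst p)\<bar> \<ge> 1)"
    using bad_step by fastforce
  then obtain st where st: "\<And>E. bad E \<Longrightarrow> bsetT (fst (st E)) \<and> bad (snd (st E)) \<and> fst (st E) \<subseteq> E \<and> snd (st E) \<subseteq> E \<and> fst (st E) \<inter> snd (st E) = {} \<and> \<bar>\<rho> (fst (st E))\<bar> \<ge> 1"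
    by metis
  define Es where "Es n = rec_nat TT (\<lambda>_ X. snd (st X)) n" for n
  have Es0: "Es 0 = TT" and EsS: "Es (Suc n) = snd (st (Es n))" for n unfolding Es_def by simp_all
  have badE: "bad (Es n)" for n by (induction n) (use b0 st in \<open>auto simp: Es0 EsS\<close>)
  define As where "As n = fst (st (Es n))" for n
  have decE: "decseq Es" by (rule decseq_SucI) (use st badE in \<open>auto simp: EsS\<close>)
  have Ab: "bsetT (As n)" and A1: "\<bar>\<rho> (As n)\<bar> \<ge> 1" and AE: "As n \<subseteq> Es n" and AEs: "As n \<inter> Es (Suc n) = {}" for n
    using st[OF badE[of n]] unfolding As_def EsS by auto
  have "disjoint_family As"
    unfolding disjoint_family_on_def
  proof (intro ballI impI)
    fix m n :: nat assume "m \<noteq> n"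
    then consider "m < n" | "n < m" by linarith
    then show "As m \<inter> As n = {}"
    proof cases
      case 1 then have "As n \<subseteq> Es (Suc m)" using AE[of n] decseqD[OF decE, of "Suc m" n] by auto
      then show ?thesis using AEs[of m] by auto
    next
      case 2 then have "As m \<subseteq> Es (Suc n)" using AE[of m] decseqD[OF decE, of "Suc n" m] by auto
      then show ?thesis using AEs[of n] by auto
    qed
  qed
  then have "(\<lambda>n. \<rho> (As n)) sums \<rho> (\<Union>n. As n)" by (rule ca[OF Ab])
  then have "(\<lambda>n. \<rho> (As n)) \<longlonglongrightarrow> 0" by (intro summable_LIMSEQ_zero sums_summable)
  then have "eventually (\<lambda>n. \<bar>\<rho> (As n)\<bar> < 1) sequentially"
    by (metis (mono_tags, lifting) LIMSEQ_D abs_minus_cancel diff_0_right eventually_sequentially real_norm_def zero_less_one)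
  then obtain N where "\<forall>n\<ge>N. \<bar>\<rho> (As n)\<bar> < 1" by (auto simp: eventually_sequentially)
  then show False using A1[of N] by auto
qed

lemma bounded: "\<exists>B. \<forall>E. \<bar>\<rho> E\<bar> \<le> B"
proof -
  obtain b where b: "\<And>F. bsetT F \<Longrightarrow> F \<subseteq> TT \<Longrightarrow> \<bar>\<rho> F\<bar> \<le> b"
    using not_bad_TT bsetT_TT unfolding bad_def by (meson not_le)
  have "\<bar>\<rho> E\<bar> \<le> max b 0" for E
    using b[of E] zero[of E] by (cases "bsetT E") (auto simp: bsetT_def)
  then show ?thesis by blast
qed

end



context rca begin

lemma hahn: "\<exists>P. bsetT P \<and> (\<forall>F. bsetT F \<longrightarrow> F \<subseteq> P \<longrightarrow> \<rho> F \<ge> 0) \<and> (\<forall>F. bsetT F \<longrightarrow> F \<inter> P = {} \<longrightarrow> \<rho> F \<le> 0)"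
proof -
  obtain B where B: "\<And>E. \<bar>\<rho> E\<bar> \<le> B" using bounded by blast
  define S where "S = \<rho> ` {E. bsetT E}"
  have bdd: "bdd_above S" unfolding S_def using B by (intro bdd_aboveI[of _ B]) (auto simp: abs_le_iff)
  have ne: "S \<noteq> {}" unfolding S_def using bsetT_empty by auto
  define \<gamma> where "\<gamma> = Sup S"
  have le\<gamma>: "\<rho> E \<le> \<gamma>" if "bsetT E" for E unfolding \<gamma>_def S_def using bdd that by (auto intro!: cSup_upper simp: S_def)
  have "\<exists>E. bsetT E \<and> \<gamma> - (1/2)^n < \<rho> E" for n :: nat
  proof -
    have "\<gamma> - (1/2)^n < Sup S" unfolding \<gamma>_def by simp
    then obtain x where "x \<in> S" "\<gamma> - (1/2)^n < x" using less_cSup_iff[OF ne bdd] by blast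
    then show ?thesis unfolding S_def by auto
  qed
  then obtain E where Eb: "\<And>n. bsetT (E n)" and Eg: "\<And>n. \<gamma> - (1/2)^n < \<rho> (E n)" by metis
  have int: "\<rho> (X \<inter> Y) \<ge> \<rho> X + \<rho> Y - \<gamma>" if "bsetT X" "bsetT Y" for X Y
  proof -
    have b: "bsetT (X \<inter> Y)" "bsetT (Y - X)" "bsetT (X \<union> Y)" using bsetT_Int[OF that(1) bsetT_borel[OF that(2)]] bsetT_Diff[OF that(2) bsetT_borel[OF that(1)]] bsetT_Un[OF that] by auto
    have e0: "X \<union> (Y - X) = X \<union> Y" "X \<inter> (Y - X) = {}" by auto
    have "\<rho> (X \<union> Y) = \<rho> X + \<rho> (Y - X)" using add[OF that(1) b(2) e0(2)] e0(1) by simp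
    moreover have e1: "(X \<inter> Y) \<union> (Y - X) = Y" "(X \<inter> Y) \<inter> (Y - X) = {}" by auto
    have "\<rho> Y = \<rho> (X \<inter> Y) + \<rho> (Y - X)" using add[OF b(1) b(2) e1(2)] e1(1) by simp
    moreover have "\<rho> (X \<union> Y) \<le> \<gamma>" using le\<gamma>[OF b(3)] .
    ultimately show ?thesis by linarith
  qed
  define C where "C m k = (\<Inter>i\<in>{..k}. E (m + i))" for m k
  have Cb: "bsetT (C m k)" for m k
  proof -
    have "(\<Inter>i\<in>{..k}. E (m + i)) \<in> sets borel" using Eb bsetT_borel by (intro sets.finite_INT) auto
    moreover have "(\<Inter>i\<in>{..k}. E (m + i)) \<subseteq> E m" by auto
    ultimately show ?thesis unfolding C_def using bsetT_sub[OF Eb] by blast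
  qed
  have CS: "C m (Suc k) = C m k \<inter> E (m + Suc k)" for m k unfolding C_def by (auto simp: atMost_Suc)
  have Cbound: "\<rho> (C m k) \<ge> \<gamma> - 2 * (1/2)^m + (1/2)^(m+k)" for m k
  proof (induction k)
    case 0 then show ?case using Eg[of m] by (simp add: C_def)
  next
    case (Suc k)
    have "\<rho> (C m (Suc k)) \<ge> \<rho> (C m k) + \<rho> (E (m + Suc k)) - \<gamma>" unfolding CS by (rule int[OF Cb Eb])
    moreover have "(1/2::real)^(m + Suc k) = (1/2)^(m+k) / 2" by simp
    ultimately show ?case using Suc Eg[of "m + Suc k"] by linarith
  qed
  define D where "D m = (\<Inter>k. C m k)" for m
  have Db: "bsetT (D m)" for m unfolding D_def by (rule bsetT_INT[OF Cb])
  have Cdec: "decseq (C m)" for m unfolding C_def decseq_def by auto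
  have Dbound: "\<rho> (D m) \<ge> \<gamma> - 2 * (1/2)^m" for m
  proof -
    have "(\<lambda>k. \<rho> (C m k)) \<longlonglongrightarrow> \<rho> (D m)" unfolding D_def by (rule cont_above[OF Cb Cdec])
    moreover have "\<forall>k. \<rho> (C m k) \<ge> \<gamma> - 2 * (1/2)^m"
    proof
      fix k show "\<rho> (C m k) \<ge> \<gamma> - 2 * (1/2)^m" using Cbound[of m k] zero_le_power[of "1/2::real" "m+k"] by linarith
    qed
    ultimately show ?thesis by (intro LIMSEQ_le_const) auto
  qed
  have Dinc: "incseq D" unfolding incseq_def D_def C_def
  proof (intro allI impI subsetI)
    fix m n x assume "m \<le> n" "x \<in> (\<Inter>k. \<Inter>i\<in>{..k}. E (m + i))"
    have "x \<in> E j" if "j \<ge> m" for j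
    proof -
      obtain i where "j = m + i" using \<open>j \<ge> m\<close> le_Suc_ex by blast
      then show ?thesis using \<open>x \<in> (\<Inter>k. \<Inter>i\<in>{..k}. E (m + i))\<close> by auto
    qed
    then have "\<forall>j\<ge>m. x \<in> E j" by blast
    then show "x \<in> (\<Inter>k. \<Inter>i\<in>{..k}. E (n + i))" using \<open>m \<le> n\<close> by auto
  qed
  define P where "P = (\<Union>m. D m)"
  have Pb: "bsetT P" unfolding P_def by (rule bsetT_UN[OF Db])
  have "(\<lambda>m. \<rho> (D m)) \<longlonglongrightarrow> \<rho> P" unfolding P_def by (rule cont_below[OF Db Dinc])
  moreover have "(\<lambda>m. \<gamma> - 2 * (1/2)^m) \<longlonglongrightarrow> \<gamma> - 2 * 0"
    by (intro tendsto_diff tendsto_mult tendsto_const LIMSEQ_power_zero) auto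
  ultimately have "\<rho> P \<ge> \<gamma>" using Dbound by (intro LIMSEQ_le[of "\<lambda>m. \<gamma> - 2 * (1/2)^m" _ "\<lambda>m. \<rho> (D m)"]) auto
  then have Pg: "\<rho> P = \<gamma>" using le\<gamma>[OF Pb] by simp
  show ?thesis
  proof (intro exI[of _ P] conjI allI impI)
    show "bsetT P" by fact
  next
    fix F assume F: "bsetT F" "F \<subseteq> P"
    have "\<rho> (P - F) = \<rho> P - \<rho> F" by (rule diff[OF Pb F])
    moreover have "\<rho> (P - F) \<le> \<gamma>" using le\<gamma> bsetT_Diff[OF Pb bsetT_borel[OF F(1)]] by blast
    ultimately show "\<rho> F \<ge> 0" using Pg by linarith
  next
    fix F assume F: "bsetT F" "F \<inter> P = {}"
    have "\<rho> (P \<union> F) = \<rho> P + \<rho> F" by (rule add[OF Pb F(1)]) (use F(2) in auto)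
    moreover have "\<rho> (P \<union> F) \<le> \<gamma>" using le\<gamma> bsetT_Un[OF Pb F(1)] by blast
    ultimately show "\<rho> F \<le> 0" using Pg by linarith
  qed
qed

end



definition pca :: "(real set \<Rightarrow> real) \<Rightarrow> bool" where
  "pca \<nu> \<longleftrightarrow> (\<forall>E\<in>sets borel. \<nu> E \<ge> 0) \<and>
     (\<forall>A. range A \<subseteq> sets borel \<longrightarrow> disjoint_family A \<longrightarrow> (\<lambda>n. \<nu> (A n)) sums \<nu> (\<Union>n. A n))"

definition mkm :: "(real set \<Rightarrow> real) \<Rightarrow> real measure" where
  "mkm \<nu> = measure_of UNIV (sets borel) (\<lambda>E. ennreal (\<nu> E))"

lemma mkm_sets: "sets (mkm \<nu>) = sets borel"
  unfolding mkm_def by (metis sets.sets_measure_of_eq space_borel)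

lemma mkm_space: "space (mkm \<nu>) = UNIV"
  unfolding mkm_def by (simp add: space_measure_of_conv)

lemma mkm_emeasure:
  assumes "pca \<nu>" "E \<in> sets borel"
  shows "emeasure (mkm \<nu>) E = ennreal (\<nu> E)"
  unfolding mkm_def
proof (rule emeasure_measure_of_sigma)
  show "sigma_algebra UNIV (sets borel)" by (metis sets.sigma_algebra_axioms space_borel)
  show "positive (sets borel) (\<lambda>E. ennreal (\<nu> E))" unfolding positive_def
  proof -
    have "(\<lambda>n::nat. \<nu> {}) sums \<nu> (\<Union>n::nat. {})" using assms(1) unfolding pca_def
      by (auto simp: disjoint_family_on_def)
    then have "summable (\<lambda>n::nat. \<nu> {})" by (rule sums_summable)
    then have "(\<lambda>n::nat. \<nu> {}) \<longlonglongrightarrow> 0" by (rule summable_LIMSEQ_zero)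
    then have "\<nu> {} = 0" by (simp add: LIMSEQ_const_iff)
    then show "ennreal (\<nu> {}) = 0" by simp
  qed
  show "countably_additive (sets borel) (\<lambda>E. ennreal (\<nu> E))" unfolding countably_additive_def
  proof (intro allI impI)
    fix A :: "nat \<Rightarrow> real set" assume "range A \<subseteq> sets borel" "disjoint_family A" "\<Union> (range A) \<in> sets borel"
    then have s: "(\<lambda>n. \<nu> (A n)) sums \<nu> (\<Union>n. A n)" and nn: "\<And>n. \<nu> (A n) \<ge> 0" using assms(1) unfolding pca_def by auto
    show "(\<Sum>i. ennreal (\<nu> (A i))) = ennreal (\<nu> (\<Union> (range A)))" by (rule suminf_ennreal_eq[OF nn s])
  qed
qed fact

lemma mkm_finite: assumes "pca \<nu>" shows "finite_measure (mkm \<nu>)"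
  by (rule finite_measureI) (simp add: mkm_space mkm_emeasure[OF assms])

lemma pca_RN:
  assumes \<nu>: "pca \<nu>" and m: "pca m" and le: "\<And>E. E \<in> sets borel \<Longrightarrow> \<nu> E \<le> m E"
  shows "\<exists>g. g \<in> borel_measurable borel \<and> (\<forall>x. g x \<ge> 0) \<and> integrable (mkm m) g \<and>
     (\<forall>E\<in>sets borel. \<nu> E = (LINT t|mkm m. indicator E t * g t))"
proof -
  let ?M = "mkm m" and ?N = "mkm \<nu>"
  interpret M: finite_measure ?M by (rule mkm_finite[OF m])
  have sN: "sets ?N = sets ?M" by (simp add: mkm_sets)
  have ac: "absolutely_continuous ?M ?N" unfolding absolutely_continuous_def
  proof
    fix A assume "A \<in> null_sets ?M"
    then have A: "A \<in> sets borel" "ennreal (m A) = 0" using mkm_emeasure[OF m] by (auto simp: mkm_sets null_sets_def)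
    then have "m A \<le> 0" by (simp add: ennreal_eq_0_iff)
    moreover have "\<nu> A \<ge> 0" using \<nu> A(1) unfolding pca_def by auto
    ultimately have "\<nu> A = 0" using le[OF A(1)] by linarith
    then show "A \<in> null_sets ?N" using A mkm_emeasure[OF \<nu> A(1)] by (auto simp: mkm_sets null_sets_def)
  qed
  obtain f where fm: "f \<in> borel_measurable ?M" and df: "density ?M f = ?N"
    using M.Radon_Nikodym_finite_measure[OF mkm_finite[OF \<nu>] sN ac] by blast
  have fmb: "f \<in> borel_measurable borel" using fm by (simp add: measurable_cong_sets[OF mkm_sets refl])
  have eqE: "ennreal (\<nu> E) = (\<integral>\<^sup>+ x. f x * indicator E x \<partial>?M)" if "E \<in> sets borel" for E
    using emeasure_density[OF fm, of E] that df mkm_emeasure[OF \<nu> that] by (simp add: mkm_sets)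
  have "(\<integral>\<^sup>+ x. f x \<partial>?M) = ennreal (\<nu> UNIV)" using eqE[of UNIV] by simp
  then have fin: "AE x in ?M. f x \<noteq> \<infinity>" by (intro nn_integral_PInf_AE[OF fm]) simp
  define g where "g x = enn2real (f x)" for x
  have gm: "g \<in> borel_measurable borel" unfolding g_def using fmb by measurable
  have gM: "g \<in> borel_measurable ?M" unfolding g_def using fm by measurable
  have key: "(\<integral>\<^sup>+ x. f x * indicator E x \<partial>?M) = (\<integral>\<^sup>+ x. ennreal (indicator E x * g x) \<partial>?M)" for E
    using fin by (intro nn_integral_cong_AE) (auto simp: g_def indicator_def less_top)
  have int: "integrable ?M (\<lambda>x. indicator E x * g x)" and eq: "\<nu> E = (LINT t|?M. indicator E t * g t)" if E: "E \<in> sets borel" for E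
  proof -
    have EM: "E \<in> sets ?M" using E by (simp add: mkm_sets)
    have nn: "\<nu> E \<ge> 0" using \<nu> E unfolding pca_def by auto
    have 1: "(\<integral>\<^sup>+ x. ennreal (indicator E x * g x) \<partial>?M) = ennreal (\<nu> E)" using eqE[OF E] key by simp
    show i: "integrable ?M (\<lambda>x. indicator E x * g x)"
    proof (rule integrableI_nn_integral_finite[OF _ _ 1])
      show "(\<lambda>x. indicator E x * g x) \<in> borel_measurable ?M" using gM EM by measurable
    qed (auto simp: g_def)
    have "(\<integral>\<^sup>+ x. ennreal (indicator E x * g x) \<partial>?M) = ennreal (LINT t|?M. indicator E t * g t)"
      by (rule nn_integral_eq_integral[OF i]) (auto simp: g_def)
    moreover have "(LINT t|?M. indicator E t * g t) \<ge> 0" by (intro integral_nonneg_AE) (auto simp: g_def)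
    ultimately show "\<nu> E = (LINT t|?M. indicator E t * g t)" using 1 nn by (simp add: ennreal_inj)
  qed
  have "integrable ?M g" using int[of UNIV] by simp
  then show ?thesis using gm eq by (intro exI[of _ g]) (auto simp: g_def)
qed



lemma rca_decomp:
  assumes "rca \<rho>"
  shows "\<exists>\<nu>p \<nu>n. pca \<nu>p \<and> pca \<nu>n \<and> (\<forall>E. bsetT E \<longrightarrow> \<rho> E = \<nu>p E - \<nu>n E) \<and> \<nu>p (- TT) = 0 \<and> \<nu>n (- TT) = 0"
proof -
  interpret rca \<rho> by fact
  obtain P where P: "bsetT P" and pos: "\<And>F. bsetT F \<Longrightarrow> F \<subseteq> P \<Longrightarrow> \<rho> F \<ge> 0"
    and neg: "\<And>F. bsetT F \<Longrightarrow> F \<inter> P = {} \<Longrightarrow> \<rho> F \<le> 0" using hahn by blast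
  define Q where "Q = TT - P"
  have Q: "bsetT Q" unfolding Q_def using bsetT_Diff[OF bsetT_TT bsetT_borel[OF P]] .
  define \<nu>p where "\<nu>p E = \<rho> (E \<inter> P)" for E
  define \<nu>n where "\<nu>n E = - \<rho> (E \<inter> Q)" for E
  have pcaI: "pca (\<lambda>E. s * \<rho> (E \<inter> R))" if R: "bsetT R" and sg: "\<And>E. E \<in> sets borel \<Longrightarrow> s * \<rho> (E \<inter> R) \<ge> 0" for R s
    unfolding pca_def
  proof (intro conjI ballI allI impI)
    fix E :: "real set" assume "E \<in> sets borel" then show "s * \<rho> (E \<inter> R) \<ge> 0" by (rule sg)
  next
    fix A :: "nat \<Rightarrow> real set" assume A: "range A \<subseteq> sets borel" "disjoint_family A"
    have "(\<lambda>n. \<rho> (A n \<inter> R)) sums \<rho> (\<Union>n. A n \<inter> R)"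
    proof (rule ca)
      show "bsetT (A n \<inter> R)" for n using A(1) R unfolding bsetT_def by auto
      show "disjoint_family (\<lambda>n. A n \<inter> R)" using A(2) unfolding disjoint_family_on_def by auto
    qed
    then have "(\<lambda>n. s * \<rho> (A n \<inter> R)) sums (s * \<rho> (\<Union>n. A n \<inter> R))" by (rule sums_mult)
    moreover have "(\<Union>n. A n \<inter> R) = (\<Union>n. A n) \<inter> R" by auto
    ultimately show "(\<lambda>n. s * \<rho> (A n \<inter> R)) sums (s * \<rho> ((\<Union>n. A n) \<inter> R))" by simp
  qed
  have p: "pca \<nu>p"
  proof -
    have "pca (\<lambda>E. 1 * \<rho> (E \<inter> P))"
    proof (rule pcaI[OF P])
      fix E :: "real set" assume "E \<in> sets borel"
      then have "bsetT (E \<inter> P)" using bsetT_Int[OF P] by (simp add: Int_commute)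
      then show "1 * \<rho> (E \<inter> P) \<ge> 0" using pos by simp
    qed
    then show ?thesis unfolding \<nu>p_def by simp
  qed
  have n: "pca \<nu>n"
  proof -
    have "pca (\<lambda>E. (-1) * \<rho> (E \<inter> Q))"
    proof (rule pcaI[OF Q])
      fix E :: "real set" assume "E \<in> sets borel"
      then have "bsetT (E \<inter> Q)" using bsetT_Int[OF Q] by (simp add: Int_commute)
      moreover have "E \<inter> Q \<inter> P = {}" unfolding Q_def by auto
      ultimately show "(-1) * \<rho> (E \<inter> Q) \<ge> 0" using neg by fastforce
    qed
    then show ?thesis unfolding \<nu>n_def by simp
  qed
  have dec: "\<rho> E = \<nu>p E - \<nu>n E" if E: "bsetT E" for E
  proof -
    have b: "bsetT (E \<inter> P)" "bsetT (E \<inter> Q)" using E P Q bsetT_Int bsetT_borel by blast+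
    have "E = (E \<inter> P) \<union> (E \<inter> Q)" "(E \<inter> P) \<inter> (E \<inter> Q) = {}" using E unfolding Q_def bsetT_def by auto
    then have "\<rho> E = \<rho> (E \<inter> P) + \<rho> (E \<inter> Q)" using add[OF b] by metis
    then show ?thesis unfolding \<nu>p_def \<nu>n_def by simp
  qed
  have "- TT \<inter> P = {}" "- TT \<inter> Q = {}" using P unfolding Q_def bsetT_def by auto
  then have "\<nu>p (- TT) = 0" "\<nu>n (- TT) = 0" unfolding \<nu>p_def \<nu>n_def by (simp_all add: empty)
  then show ?thesis using p n dec by blast
qed

lemma cmeas_rca:
  assumes "cmeas \<mu>"
  shows "rca (\<lambda>E. Re (\<mu> E))" "rca (\<lambda>E. Im (\<mu> E))"
  using assms unfolding cmeas_def rca_def by (auto intro: sums_Re sums_Im)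

lemma pca_add: "pca a \<Longrightarrow> pca b \<Longrightarrow> pca (\<lambda>E. a E + b E)"
  unfolding pca_def by (auto intro: sums_add)

lemma cmeas_crep:
  assumes mu: "cmeas \<mu>"
  shows "\<exists>M h. crep M h \<mu>"
proof -
  obtain p1 n1 where p1: "pca p1" and n1: "pca n1" and d1: "\<And>E. bsetT E \<Longrightarrow> Re (\<mu> E) = p1 E - n1 E"
    and z1: "p1 (- TT) = 0" "n1 (- TT) = 0"
    using rca_decomp[OF cmeas_rca(1)[OF mu]] by blast
  obtain p2 n2 where p2: "pca p2" and n2: "pca n2" and d2: "\<And>E. bsetT E \<Longrightarrow> Im (\<mu> E) = p2 E - n2 E"
    and z2: "p2 (- TT) = 0" "n2 (- TT) = 0"
    using rca_decomp[OF cmeas_rca(2)[OF mu]] by blast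
  define m where "m E = p1 E + n1 E + p2 E + n2 E" for E
  have m: "pca m" unfolding m_def by (intro pca_add p1 n1 p2 n2)
  have nn: "\<And>E. E \<in> sets borel \<Longrightarrow> p1 E \<ge> 0 \<and> n1 E \<ge> 0 \<and> p2 E \<ge> 0 \<and> n2 E \<ge> 0"
    using p1 n1 p2 n2 unfolding pca_def by auto
  have le: "p1 E \<le> m E" "n1 E \<le> m E" "p2 E \<le> m E" "n2 E \<le> m E" if "E \<in> sets borel" for E
    using nn[OF that] unfolding m_def by linarith+
  let ?M = "mkm m"
  obtain g1 where g1: "g1 \<in> borel_measurable borel" "integrable ?M g1" "\<And>E. E \<in> sets borel \<Longrightarrow> p1 E = (LINT t|?M. indicator E t * g1 t)"
    using pca_RN[OF p1 m le(1)] by blast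
  obtain g2 where g2: "g2 \<in> borel_measurable borel" "integrable ?M g2" "\<And>E. E \<in> sets borel \<Longrightarrow> n1 E = (LINT t|?M. indicator E t * g2 t)"
    using pca_RN[OF n1 m le(2)] by blast
  obtain g3 where g3: "g3 \<in> borel_measurable borel" "integrable ?M g3" "\<And>E. E \<in> sets borel \<Longrightarrow> p2 E = (LINT t|?M. indicator E t * g3 t)"
    using pca_RN[OF p2 m le(3)] by blast
  obtain g4 where g4: "g4 \<in> borel_measurable borel" "integrable ?M g4" "\<And>E. E \<in> sets borel \<Longrightarrow> n2 E = (LINT t|?M. indicator E t * g4 t)"
    using pca_RN[OF n2 m le(4)] by blast
  define h where "h t = complex_of_real (g1 t - g2 t) + \<i> * complex_of_real (g3 t - g4 t)" for t
  have crep: "crep ?M h \<mu>"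
    unfolding crep_def
  proof (intro conjI allI)
    show "sets ?M = sets borel" by (rule mkm_sets)
    show "finite_measure ?M" by (rule mkm_finite[OF m])
    have "m (- TT) = 0" unfolding m_def using z1 z2 by simp
    then show "emeasure ?M (- TT) = 0" using mkm_emeasure[OF m, of "- TT"] TT_borel by simp
    show "integrable ?M h" unfolding h_def using g1 g2 g3 g4 by auto
    fix E
    show "\<mu> E = (if bsetT E then (LINT t:E|?M. h t) else 0)"
    proof (cases "bsetT E")
      case False then show ?thesis using mu unfolding cmeas_def by auto
    next
      case True
      have Eb: "E \<in> sets borel" using True bsetT_borel by blast
      have EM: "E \<in> sets ?M" using Eb by (simp add: mkm_sets)
      have ii: "integrable ?M (\<lambda>t. indicator E t * g t)" if "integrable ?M g" for g :: "real \<Rightarrow> real"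
        using that EM by (intro integrable_mult_indicator[of E ?M g, unfolded real_scaleR_def]) auto
      have "(LINT t:E|?M. h t) = (LINT t|?M. complex_of_real (indicator E t * g1 t) - complex_of_real (indicator E t * g2 t)
          + \<i> * (complex_of_real (indicator E t * g3 t) - complex_of_real (indicator E t * g4 t)))"
        unfolding set_lebesgue_integral_def h_def
        by (intro Bochner_Integration.integral_cong refl) (simp add: indicator_def)
      also have "\<dots> = complex_of_real (p1 E - n1 E) + \<i> * complex_of_real (p2 E - n2 E)"
      proof -
        define a where "a g t = complex_of_real (indicator E t * g t)" for g :: "real \<Rightarrow> real" and t
        have ia: "integrable ?M (a g)" if "integrable ?M g" for g unfolding a_def by (rule integrable_of_real[OF ii[OF that]])
        have la: "(LINT t|?M. a g t) = complex_of_real (LINT t|?M. indicator E t * g t)" for g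
          unfolding a_def by (rule integral_complex_of_real)
        have "(LINT t|?M. a g1 t - a g2 t + \<i> * (a g3 t - a g4 t)) = 
            ((LINT t|?M. a g1 t) - (LINT t|?M. a g2 t)) + \<i> * ((LINT t|?M. a g3 t) - (LINT t|?M. a g4 t))"
          using ia[OF g1(2)] ia[OF g2(2)] ia[OF g3(2)] ia[OF g4(2)] by simp
        then show ?thesis unfolding la using g1(3)[OF Eb] g2(3)[OF Eb] g3(3)[OF Eb] g4(3)[OF Eb] unfolding a_def by simp
      qed
      also have "\<dots> = \<mu> E" using d1[OF True] d2[OF True] by (simp add: complex_eq_iff)
      finally show ?thesis using True by simp
    qed
  qed
  then show ?thesis by blast
qed



lemma cmeas_lin:
  assumes "cmeas \<mu>1" "cmeas \<mu>2"
  shows "cmeas (\<lambda>E. \<mu>1 E + c * \<mu>2 E)"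
  using assms unfolding cmeas_def by (auto intro!: sums_add sums_mult)

lemma cint_lin:
  assumes "cmeas \<mu>1" "cmeas \<mu>2" "bb f"
  shows "cint (\<lambda>E. \<mu>1 E + c * \<mu>2 E) f = cint \<mu>1 f + c * cint \<mu>2 f"
proof -
  obtain M1 h1 where r1: "crep M1 h1 \<mu>1" using cmeas_crep[OF assms(1)] by blast
  obtain M2 h2 where r2: "crep M2 h2 \<mu>2" using cmeas_crep[OF assms(2)] by blast
  obtain M3 h3 where r3: "crep M3 h3 (\<lambda>E. \<mu>1 E + c * \<mu>2 E)" using cmeas_crep[OF cmeas_lin[OF assms(1,2)]] by blast
  show ?thesis using crep_unique_lin[OF r1 r2 r3 _ assms(3)] cint_rep[OF r1 assms(3)] cint_rep[OF r2 assms(3)]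
      cint_rep[OF r3 assms(3)] by simp
qed

definition ee :: "int \<Rightarrow> real \<Rightarrow> complex" where
  "ee m t = exp (\<i> * of_int m * of_real t)"

lemma ee_bb: "bb (ee m)"
  unfolding bb_def ee_def
proof
  show "(\<lambda>t. exp (\<i> * of_int m * complex_of_real t)) \<in> borel_measurable borel"
    by (intro borel_measurable_continuous_onI continuous_intros)
  have "norm (exp (\<i> * of_int m * complex_of_real t)) = 1" for t
    by (simp add: norm_exp_eq_Re)
  then show "\<exists>C. \<forall>x. cmod (exp (\<i> * of_int m * complex_of_real x)) \<le> C" by (intro exI[of _ 1]) simp
qed

lemma ee_mult: "ee m t * ee n t = ee (m + n) t"
  unfolding ee_def by (simp add: exp_add[symmetric] algebra_simps)

lemma ee_0: "ee 0 t = 1" unfolding ee_def by simp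

lemma bb_mult: "bb f \<Longrightarrow> bb g \<Longrightarrow> bb (\<lambda>x. f x * g x)"
  unfolding bb_def
  apply auto
  subgoal for C D
  proof (rule exI[of _ "C * D"], rule allI)
    fix x assume C: "\<forall>x. cmod (f x) \<le> C" and D: "\<forall>x. cmod (g x) \<le> D"
    have "0 \<le> C" using C norm_ge_zero order_trans by blast
    then show "cmod (f x * g x) \<le> C * D" unfolding norm_mult using C D by (intro mult_mono) auto
  qed
  done

lemma Tshift_eq: "Tshift m \<mu> = (\<lambda>E. if bsetT E then cint \<mu> (\<lambda>t. indicator E t * ee m t) else 0)"
  unfolding Tshift_def ee_def by simp

lemma Tshift_rep:
  assumes r: "crep M h \<mu>"
  shows "crep M (\<lambda>t. ee m t * h t) (Tshift m \<mu>)"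
  unfolding crep_def
proof (intro conjI allI)
  show "sets M = sets borel" "finite_measure M" "emeasure M (- TT) = 0" using r unfolding crep_def by auto
  show "integrable M (\<lambda>t. ee m t * h t)" using int_bh[OF r ee_bb] .
  fix E
  show "Tshift m \<mu> E = (if bsetT E then LINT t:E|M. ee m t * h t else 0)"
  proof (cases "bsetT E")
    case True
    have b: "bb (\<lambda>t. indicator E t * ee m t)" by (intro bb_mult bb_ind ee_bb) (use True bsetT_borel in auto)
    have "Tshift m \<mu> E = ci M h (\<lambda>t. indicator E t * ee m t)" unfolding Tshift_eq using True cint_rep[OF r b] by simp
    also have "\<dots> = (LINT t:E|M. ee m t * h t)" unfolding ci_def set_lebesgue_integral_def
      by (intro Bochner_Integration.integral_cong refl) (simp add: indicator_def)
    finally show ?thesis using True by simp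
  qed (simp add: Tshift_eq)
qed

lemma crep_ext:
  assumes "crep M h \<mu>" "crep M h' \<nu>" "\<And>t. h t = h' t"
  shows "\<mu> = \<nu>"
proof -
  have "h = h'" using assms(3) by auto
  then show ?thesis using assms(1,2) unfolding crep_def by auto
qed

lemma Tshift_cmeas: "cmeas \<mu> \<Longrightarrow> cmeas (Tshift m \<mu>)"
  using cmeas_crep Tshift_rep crep_cmeas by blast

lemma Tshift_inv:
  assumes "cmeas \<mu>"
  shows "Tshift (-m) (Tshift m \<mu>) = \<mu>"
proof -
  obtain M h where r: "crep M h \<mu>" using cmeas_crep[OF assms] by blast
  have "crep M (\<lambda>t. ee (-m) t * (ee m t * h t)) (Tshift (-m) (Tshift m \<mu>))" by (intro Tshift_rep r)
  then show ?thesis by (rule crep_ext[OF _ r]) (simp add: mult.assoc[symmetric] ee_mult ee_0)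
qed

lemma Tshift_0:
  assumes "cmeas \<mu>"
  shows "Tshift 0 \<mu> = \<mu>"
proof -
  obtain M h where r: "crep M h \<mu>" using cmeas_crep[OF assms] by blast
  have "crep M (\<lambda>t. ee 0 t * h t) (Tshift 0 \<mu>)" by (intro Tshift_rep r)
  then show ?thesis by (rule crep_ext[OF _ r]) (simp add: ee_0)
qed

lemma Tshift_lin:
  assumes "cmeas \<mu>1" "cmeas \<mu>2"
  shows "Tshift m (\<lambda>E. \<mu>1 E + c * \<mu>2 E) = (\<lambda>E. Tshift m \<mu>1 E + c * Tshift m \<mu>2 E)"
proof
  fix E
  show "Tshift m (\<lambda>E. \<mu>1 E + c * \<mu>2 E) E = Tshift m \<mu>1 E + c * Tshift m \<mu>2 E"
  proof (cases "bsetT E")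
    case True
    have b: "bb (\<lambda>t. indicator E t * ee m t)" by (intro bb_mult bb_ind ee_bb) (use True bsetT_borel in auto)
    show ?thesis unfolding Tshift_eq using True cint_lin[OF assms b] by simp
  qed (simp add: Tshift_eq)
qed

lemma delta0_rep: "crep (return borel 0) (\<lambda>t. 1) delta0"
  unfolding crep_def
proof (intro conjI allI)
  show "sets (return borel 0) = sets borel" by simp
  show "finite_measure (return borel 0)" by (intro prob_space.finite_measure prob_space_return) simp
  have "0 \<in> TT" unfolding TT_def by simp
  then show "emeasure (return borel (0::real)) (- TT) = 0" using TT_borel by (simp add: indicator_def)
  show "integrable (return borel 0) (\<lambda>t. 1::complex)" by (intro finite_measure.integrable_const prob_space.finite_measure prob_space_return) simp
  fix E
  show "delta0 E = (if bsetT E then LINT t:E|return borel 0. 1 else 0)"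
  proof (cases "bsetT E")
    case True
    have Eb: "E \<in> sets borel" using True bsetT_borel by blast
    have "(LINT x|return borel 0. indicator E x *\<^sub>R (1::complex)) = indicator E (0::real) *\<^sub>R 1"
      by (rule integral_return) (use Eb in measurable)
    then show ?thesis using True unfolding delta0_def set_lebesgue_integral_def by (simp add: indicator_def)
  qed (simp add: delta0_def)
qed

lemma cmeas_delta0: "cmeas delta0" by (rule crep_cmeas[OF delta0_rep])

lemma Tshift_delta0: "Tshift m delta0 = delta0"
proof -
  have r: "crep (return borel 0) (\<lambda>t. ee m t * 1) (Tshift m delta0)" by (rule Tshift_rep[OF delta0_rep])
  show ?thesis
  proof
    fix E show "Tshift m delta0 E = delta0 E"
    proof (cases "bsetT E")
      case True
      have Eb: "E \<in> sets borel" using True bsetT_borel by blast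
      have em: "ee m \<in> borel_measurable borel" using ee_bb unfolding bb_def by blast
      have "Tshift m delta0 E = (LINT x|return borel 0. indicator E x *\<^sub>R (ee m x * 1))"
        using r True unfolding crep_def set_lebesgue_integral_def by simp
      also have "\<dots> = indicator E 0 *\<^sub>R (ee m 0 * 1)"
        by (rule integral_return) (use Eb em in measurable)
      also have "\<dots> = delta0 E" using True unfolding delta0_def ee_def by (simp add: indicator_def)
      finally show ?thesis .
    next
      case False then show ?thesis using r unfolding crep_def delta0_def by simp
    qed
  qed
qed

lemma fourier_Tshift:
  assumes "cmeas \<mu>"
  shows "fourier (Tshift m \<mu>) n = fourier \<mu> (n - m)"
proof -
  obtain M h where r: "crep M h \<mu>" using cmeas_crep[OF assms] by blast
  have e: "(\<lambda>t. exp (- \<i> * of_int k * of_real t)) = ee (-k)" for k unfolding ee_def by auto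
  have "fourier (Tshift m \<mu>) n = ci M (\<lambda>t. ee m t * h t) (ee (-n))"
    unfolding fourier_def e by (rule cint_rep[OF Tshift_rep[OF r] ee_bb])
  also have "\<dots> = ci M h (ee (-(n - m)))"
    unfolding ci_def by (intro Bochner_Integration.integral_cong refl) (simp add: mult.assoc[symmetric] ee_mult)
  also have "\<dots> = fourier \<mu> (n - m)" unfolding fourier_def e by (rule cint_rep[OF r ee_bb, symmetric])
  finally show ?thesis .
qed

lemma range_fourier_Tshift:
  assumes "cmeas \<mu>"
  shows "range (fourier (Tshift m \<mu>)) = range (fourier \<mu>)"
proof -
  have "range (fourier (Tshift m \<mu>)) = range (\<lambda>n. fourier \<mu> (n - m))" using fourier_Tshift[OF assms] by simp
  also have "\<dots> = range (fourier \<mu>)"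
  proof
    show "range (\<lambda>n. fourier \<mu> (n - m)) \<subseteq> range (fourier \<mu>)" by auto
    show "range (fourier \<mu>) \<subseteq> range (\<lambda>n. fourier \<mu> (n - m))"
    proof
      fix x assume "x \<in> range (fourier \<mu>)"
      then obtain k where "x = fourier \<mu> k" by auto
      then have "x = fourier \<mu> ((k + m) - m)" by simp
      then show "x \<in> range (\<lambda>n. fourier \<mu> (n - m))" by blast
    qed
  qed
  finally show ?thesis .
qed



lemma tor_TT: "tor x \<in> TT"
proof -
  have p: "2 * pi > 0" by simp
  let ?y = "x / (2*pi)"
  have "of_int \<lfloor>?y\<rfloor> \<le> ?y" "?y < of_int \<lfloor>?y\<rfloor> + 1" by linarith+
  then have "2*pi * of_int \<lfloor>?y\<rfloor> \<le> 2*pi * ?y" "2*pi * ?y < 2*pi * (of_int \<lfloor>?y\<rfloor> + 1)"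
    using p by (intro mult_left_mono mult_strict_left_mono; simp)+
  then have "2*pi * of_int \<lfloor>?y\<rfloor> \<le> x" "x < 2*pi * of_int \<lfloor>?y\<rfloor> + 2*pi"
    using p by (simp_all add: field_simps)
  then show ?thesis unfolding tor_def TT_def by auto
qed

lemma tor_meas: "tor \<in> borel_measurable borel"
  unfolding tor_def[abs_def] by measurable

lemma ee_tor: "ee m (tor x) = ee m x"
proof -
  have "ee m (tor x) = exp (\<i> * of_int m * of_real x + \<i> * (of_int (- m * \<lfloor>x / (2*pi)\<rfloor>) * (of_real pi * 2)))"
    unfolding ee_def tor_def by (simp add: algebra_simps)
  also have "\<dots> = ee m x" unfolding ee_def by (rule exp_plus_2pin)
  finally show ?thesis .
qed

lemma ee_add: "ee m (s + t) = ee m s * ee m t"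
  unfolding ee_def by (simp add: exp_add[symmetric] algebra_simps)

definition innr :: "real measure \<Rightarrow> (real \<Rightarrow> complex) \<Rightarrow> (real \<Rightarrow> complex) \<Rightarrow> real \<Rightarrow> complex" where
  "innr M h g t = ci M h (\<lambda>s. g (tor (s + t)))"

lemma bb_comp: "bb g \<Longrightarrow> bb (\<lambda>s. g (tor (s + t)))"
  unfolding bb_def
proof (elim conjE, intro conjI)
  assume "g \<in> borel_measurable borel"
  then show "(\<lambda>s. g (tor (s + t))) \<in> borel_measurable borel" using tor_meas by measurable
qed auto

lemma int_norm_nonneg: "(LINT t|M. norm (h t :: complex)) \<ge> 0" by (rule integral_nonneg_AE) auto

lemma innr_bound:
  assumes r: "crep M h a" and g: "bb g" "\<And>x. norm (g x) \<le> C"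
  shows "norm (innr M h g t) \<le> C * (LINT t|M. norm (h t))"
  unfolding innr_def by (rule ci_bound[OF r bb_comp[OF g(1)]]) (use g in auto)

lemma innr_bb:
  assumes r: "crep M h a" and g: "bb g"
  shows "bb (innr M h g)"
proof -
  have s: "sets M = sets borel" and fin: "finite_measure M" using r unfolding crep_def by auto
  interpret finite_measure M by fact
  have gm: "g \<in> borel_measurable borel" and hm: "h \<in> borel_measurable borel"
    using g crep_meas[OF r] unfolding bb_def by auto
  have sp: "sets (borel \<Otimes>\<^sub>M M) = sets (borel \<Otimes>\<^sub>M borel)" by (rule sets_pair_measure_cong[OF refl s])
  have "(\<lambda>p. g (tor (snd p + fst p)) * h (snd p)) \<in> borel_measurable (borel \<Otimes>\<^sub>M borel)"
    using gm hm tor_meas by measurable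
  then have "case_prod (\<lambda>t s. g (tor (s + t)) * h s) \<in> borel_measurable (borel \<Otimes>\<^sub>M M)"
    by (simp add: measurable_cong_sets[OF sp refl] case_prod_beta')
  then have m: "(\<lambda>t. LINT s|M. g (tor (s + t)) * h s) \<in> borel_measurable borel"
    by (rule borel_measurable_lebesgue_integral)
  obtain C where C: "\<And>x. norm (g x) \<le> C" using g unfolding bb_def by auto
  show ?thesis unfolding bb_def
  proof
    show "innr M h g \<in> borel_measurable borel" using m unfolding innr_def[abs_def] ci_def .
    show "\<exists>C. \<forall>x. norm (innr M h g x) \<le> C" using innr_bound[OF r g C] by blast
  qed
qed

lemma innr_ind:
  assumes r: "crep M h a" and A: "A \<in> sets borel"
  shows "innr M h (indicator A) t = a {s \<in> TT. tor (s + t) \<in> A}"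
proof -
  have B: "{s. tor (s + t) \<in> A} \<in> sets borel"
  proof -
    have "(\<lambda>s. tor (s + t)) \<in> borel_measurable borel" using tor_meas by measurable
    from measurable_sets_borel[OF this A] show ?thesis by (simp add: vimage_def)
  qed
  have "(\<lambda>s. indicator A (tor (s + t)) :: complex) = indicator {s. tor (s + t) \<in> A}"
    by (auto simp: indicator_def)
  then have "innr M h (indicator A) t = ci M h (indicator {s. tor (s + t) \<in> A})"
    unfolding innr_def by simp
  also have "\<dots> = a ({s. tor (s + t) \<in> A} \<inter> TT)" by (rule ci_ind[OF r B])
  also have "{s. tor (s + t) \<in> A} \<inter> TT = {s \<in> TT. tor (s + t) \<in> A}" by auto
  finally show ?thesis .
qed

lemma conv_eq:
  assumes ra: "crep Ma ha a" and rb: "crep Mb hb b" and E: "bsetT E"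
  shows "conv a b E = ci Mb hb (innr Ma ha (indicator E))"
proof -
  have Eb: "E \<in> sets borel" using E bsetT_borel by blast
  have "(\<lambda>t. a {s \<in> TT. tor (s + t) \<in> E}) = innr Ma ha (indicator E)"
    using innr_ind[OF ra Eb] by auto
  then show ?thesis unfolding conv_def using E cint_rep[OF rb innr_bb[OF ra bb_ind[OF Eb]]] by simp
qed

lemma innr_sum:
  fixes N :: nat
  assumes r: "crep M h a" and A: "\<And>n. A n \<in> sets borel" and d: "disjoint_family A"
  shows "innr M h (indicator (\<Union>i<N. A i)) t = (\<Sum>i<N. innr M h (indicator (A i)) t)"
proof -
  have "innr M h (indicator (\<Union>i<N. A i)) t = ci M h (\<lambda>s. \<Sum>i<N. indicator (A i) (tor (s + t)))"
    unfolding innr_def using indicator_disj_lessThan[OF d] by presburger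
  also have "\<dots> = (\<Sum>i<N. ci M h (\<lambda>s. indicator (A i) (tor (s + t))))"
    by (rule ci_sum[OF r]) (auto intro: bb_comp bb_ind A)
  finally show ?thesis unfolding innr_def .
qed

lemma conv_cmeas:
  assumes a: "cmeas a" and b: "cmeas b"
  shows "cmeas (conv a b)"
proof -
  obtain Ma ha where ra: "crep Ma ha a" using cmeas_crep[OF a] by blast
  obtain Mb hb where rb: "crep Mb hb b" using cmeas_crep[OF b] by blast
  show ?thesis unfolding cmeas_def
  proof (intro conjI allI impI)
    fix E assume "\<not> bsetT E" then show "conv a b E = 0" unfolding conv_def by simp
  next
    fix A :: "nat \<Rightarrow> real set" assume A: "\<forall>n. bsetT (A n)" and d: "disjoint_family A"
    have Ab: "A n \<in> sets borel" for n using A bsetT_borel by blast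
    have U: "bsetT (\<Union>n. A n)" using A by (intro bsetT_UN) auto
    have Ub: "(\<Union>n. A n) \<in> sets borel" using bsetT_borel[OF U] .
    define F where "F N = innr Ma ha (indicator (\<Union>i<N. A i))" for N
    have Fs: "F N t = (\<Sum>i<N. innr Ma ha (indicator (A i)) t)" for N t
      unfolding F_def by (rule innr_sum[OF ra Ab d])
    have pw: "(\<lambda>n. innr Ma ha (indicator (A n)) t) sums innr Ma ha (indicator (\<Union>n. A n)) t" for t
    proof -
      have "(\<lambda>n. a {s \<in> TT. tor (s + t) \<in> A n}) sums a (\<Union>n. {s \<in> TT. tor (s + t) \<in> A n})"
      proof (rule a[unfolded cmeas_def, THEN conjunct2, rule_format])
        show "bsetT {s \<in> TT. tor (s + t) \<in> A n}" for n
        proof -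
          have "(\<lambda>s. tor (s + t)) \<in> borel_measurable borel" using tor_meas by measurable
          from measurable_sets_borel[OF this Ab[of n]] have "{s. tor (s + t) \<in> A n} \<in> sets borel" by (simp add: vimage_def)
          then have "{s. tor (s + t) \<in> A n} \<inter> TT \<in> sets borel" using TT_borel by auto
          moreover have "{s. tor (s + t) \<in> A n} \<inter> TT = {s \<in> TT. tor (s + t) \<in> A n}" by auto
          ultimately show ?thesis unfolding bsetT_def by auto
        qed
        show "disjoint_family (\<lambda>n. {s \<in> TT. tor (s + t) \<in> A n})"
          using d unfolding disjoint_family_on_def by auto
      qed
      moreover have "(\<Union>n. {s \<in> TT. tor (s + t) \<in> A n}) = {s \<in> TT. tor (s + t) \<in> (\<Union>n. A n)}" by auto
      ultimately show ?thesis using innr_ind[OF ra Ab] innr_ind[OF ra Ub] by simp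
    qed
    have cn: "conv a b (A n) = ci Mb hb (innr Ma ha (indicator (A n)))" for n using conv_eq[OF ra rb] A by blast
    have "(\<lambda>N. ci Mb hb (F N)) \<longlonglongrightarrow> ci Mb hb (innr Ma ha (indicator (\<Union>n. A n)))"
    proof (rule ci_dc[OF rb, where C="1 * (LINT t|Ma. norm (ha t))"])
      show "bb (F N)" for N unfolding F_def by (intro innr_bb[OF ra] bb_ind) (use Ab in auto)
      show "bb (innr Ma ha (indicator (\<Union>n. A n)))" by (intro innr_bb[OF ra] bb_ind Ub)
      show "(\<lambda>N. F N x) \<longlonglongrightarrow> innr Ma ha (indicator (\<Union>n. A n)) x" for x
        using pw[of x] unfolding Fs sums_def .
      show "norm (F N x) \<le> 1 * (LINT t|Ma. norm (ha t))" for N x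
        unfolding F_def by (rule innr_bound[OF ra]) (use Ab in \<open>auto intro!: bb_ind simp: indicator_def\<close>)
    qed
    moreover have "ci Mb hb (F N) = (\<Sum>n<N. conv a b (A n))" for N
    proof -
      have "ci Mb hb (F N) = ci Mb hb (\<lambda>t. \<Sum>i<N. innr Ma ha (indicator (A i)) t)" using Fs by presburger
      also have "\<dots> = (\<Sum>i<N. ci Mb hb (innr Ma ha (indicator (A i))))"
        by (rule ci_sum[OF rb]) (auto intro: innr_bb[OF ra] bb_ind Ab)
      finally show ?thesis using cn by simp
    qed
    moreover have "conv a b (\<Union>n. A n) = ci Mb hb (innr Ma ha (indicator (\<Union>n. A n)))" by (rule conv_eq[OF ra rb U])
    ultimately show "(\<lambda>n. conv a b (A n)) sums conv a b (\<Union>n. A n)" unfolding sums_def by simp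
  qed
qed



lemma innr_add:
  assumes r: "crep M h a" and "bb f" "bb g"
  shows "innr M h (\<lambda>x. f x + g x) t = innr M h f t + innr M h g t"
  unfolding innr_def by (rule ci_add[OF r bb_comp[OF assms(2)] bb_comp[OF assms(3)]])

lemma innr_scal:
  assumes r: "crep M h a"
  shows "innr M h (\<lambda>x. c * f x) t = c * innr M h f t"
  unfolding innr_def by (rule ci_scal[OF r])

lemma conv_formula:
  assumes ra: "crep Ma ha a" and rb: "crep Mb hb b" and g: "bb g"
  shows "cint (conv a b) g = ci Mb hb (innr Ma ha g)"
proof -
  have a: "cmeas a" and b: "cmeas b" using crep_cmeas ra rb by blast+
  obtain Mc hc where rc: "crep Mc hc (conv a b)" using cmeas_crep[OF conv_cmeas[OF a b]] by blast
  define \<Phi> where "\<Phi> g = ci Mc hc g - ci Mb hb (innr Ma ha g)" for g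
  define K where "K = (LINT t|Mc. norm (hc t)) + (LINT t|Ma. norm (ha t)) * (LINT t|Mb. norm (hb t))"
  have "\<Phi> g = 0"
  proof (rule phi_zero[where \<Phi>=\<Phi> and K=K])
    fix f g assume fg: "bb f" "bb g"
    have "innr Ma ha (\<lambda>x. f x + g x) = (\<lambda>t. innr Ma ha f t + innr Ma ha g t)"
      using innr_add[OF ra fg] by auto
    then show "\<Phi> (\<lambda>x. f x + g x) = \<Phi> f + \<Phi> g" unfolding \<Phi>_def
      using ci_add[OF rc fg] ci_add[OF rb innr_bb[OF ra fg(1)] innr_bb[OF ra fg(2)]] by simp
  next
    fix c f assume "bb f"
    have "innr Ma ha (\<lambda>x. c * f x) = (\<lambda>t. c * innr Ma ha f t)" using innr_scal[OF ra] by auto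
    then show "\<Phi> (\<lambda>x. c * f x) = c * \<Phi> f" unfolding \<Phi>_def
      using ci_scal[OF rc] ci_scal[OF rb] by (simp add: algebra_simps)
  next
    fix A :: "real set" assume A: "A \<in> sets borel"
    have AT: "bsetT (A \<inter> TT)" using A TT_borel unfolding bsetT_def by auto
    have "innr Ma ha (indicator (A \<inter> TT)) = innr Ma ha (indicator A)"
      unfolding innr_def using tor_TT by (auto simp: indicator_def)
    then show "\<Phi> (indicator A) = 0" unfolding \<Phi>_def using ci_ind[OF rc A] conv_eq[OF ra rb AT] by simp
  next
    fix f C assume f: "bb f" "\<forall>x. norm (f x) \<le> C"
    have "norm (\<Phi> f) \<le> norm (ci Mc hc f) + norm (ci Mb hb (innr Ma ha f))"
      unfolding \<Phi>_def by (rule norm_triangle_ineq4)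
    also have "\<dots> \<le> C * (LINT t|Mc. norm (hc t)) + (C * (LINT t|Ma. norm (ha t))) * (LINT t|Mb. norm (hb t))"
    proof (rule add_mono)
      show "norm (ci Mc hc f) \<le> C * (LINT t|Mc. norm (hc t))" using ci_bound[OF rc f(1)] f(2) by auto
      show "norm (ci Mb hb (innr Ma ha f)) \<le> (C * (LINT t|Ma. norm (ha t))) * (LINT t|Mb. norm (hb t))"
        by (rule ci_bound[OF rb innr_bb[OF ra f(1)]]) (rule innr_bound[OF ra f(1)], use f(2) in auto)
    qed
    also have "\<dots> = K * C" unfolding K_def by (simp add: algebra_simps)
    finally show "norm (\<Phi> f) \<le> K * C" .
  qed (fact g)
  then show ?thesis unfolding \<Phi>_def using cint_rep[OF rc g] by simp
qed

lemma conv_Tshift: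
  assumes a: "cmeas a" and b: "cmeas b"
  shows "conv (Tshift m a) (Tshift m b) = Tshift m (conv a b)"
proof
  fix E
  obtain Ma ha where ra: "crep Ma ha a" using cmeas_crep[OF a] by blast
  obtain Mb hb where rb: "crep Mb hb b" using cmeas_crep[OF b] by blast
  have ra': "crep Ma (\<lambda>t. ee m t * ha t) (Tshift m a)" by (rule Tshift_rep[OF ra])
  have rb': "crep Mb (\<lambda>t. ee m t * hb t) (Tshift m b)" by (rule Tshift_rep[OF rb])
  show "conv (Tshift m a) (Tshift m b) E = Tshift m (conv a b) E"
  proof (cases "bsetT E")
    case False then show ?thesis unfolding conv_def Tshift_eq by simp
  next
    case True
    have Eb: "E \<in> sets borel" using True bsetT_borel by blast
    have bE: "bb (\<lambda>t. indicator E t * ee m t)" by (intro bb_mult bb_ind ee_bb Eb)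
    have L: "conv (Tshift m a) (Tshift m b) E = ci Mb (\<lambda>t. ee m t * hb t) (innr Ma (\<lambda>t. ee m t * ha t) (indicator E))"
      by (rule conv_eq[OF ra' rb' True])
    have R: "Tshift m (conv a b) E = ci Mb hb (innr Ma ha (\<lambda>t. indicator E t * ee m t))"
      unfolding Tshift_eq using True conv_formula[OF ra rb bE] by simp
    have inn: "innr Ma ha (\<lambda>t. indicator E t * ee m t) t = ee m t * innr Ma (\<lambda>t. ee m t * ha t) (indicator E) t" for t
    proof -
      have "innr Ma ha (\<lambda>t. indicator E t * ee m t) t = ci Ma ha (\<lambda>s. ee m t * (indicator E (tor (s + t)) * ee m s))"
        unfolding innr_def by (simp add: ee_tor ee_add algebra_simps)
      also have "\<dots> = ee m t * ci Ma ha (\<lambda>s. indicator E (tor (s + t)) * ee m s)" by (rule ci_scal[OF ra])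
      also have "ci Ma ha (\<lambda>s. indicator E (tor (s + t)) * ee m s) = innr Ma (\<lambda>t. ee m t * ha t) (indicator E) t"
        unfolding innr_def ci_def by (simp add: algebra_simps)
      finally show ?thesis .
    qed
    show ?thesis unfolding L R ci_def inn by (simp add: algebra_simps)
  qed
qed

lemma cinvertible_Tshift:
  assumes x: "cmeas x" and inv: "cinvertible x"
  shows "cinvertible (Tshift m x)"
proof -
  obtain \<nu> where \<nu>: "cmeas \<nu>" "conv x \<nu> = delta0" "conv \<nu> x = delta0" using inv unfolding cinvertible_def by blast
  show ?thesis unfolding cinvertible_def
  proof (intro exI[of _ "Tshift m \<nu>"] conjI)
    show "cmeas (Tshift m \<nu>)" by (rule Tshift_cmeas[OF \<nu>(1)])
    show "conv (Tshift m x) (Tshift m \<nu>) = delta0" using conv_Tshift[OF x \<nu>(1)] \<nu>(2) Tshift_delta0 by simp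
    show "conv (Tshift m \<nu>) (Tshift m x) = delta0" using conv_Tshift[OF \<nu>(1) x] \<nu>(3) Tshift_delta0 by simp
  qed
qed

lemma Tshift_shift_delta:
  assumes "cmeas \<mu>"
  shows "Tshift m (\<lambda>E. \<mu> E - z * delta0 E) = (\<lambda>E. Tshift m \<mu> E - z * delta0 E)"
proof -
  have "Tshift m (\<lambda>E. \<mu> E - z * delta0 E) = Tshift m (\<lambda>E. \<mu> E + (- z) * delta0 E)" by simp
  also have "\<dots> = (\<lambda>E. Tshift m \<mu> E + (- z) * Tshift m delta0 E)" by (rule Tshift_lin[OF assms cmeas_delta0])
  finally show ?thesis using Tshift_delta0 by simp
qed

lemma cspectrum_Tshift:
  assumes mu: "cmeas \<mu>"
  shows "cspectrum (Tshift m \<mu>) = cspectrum \<mu>"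
proof -
  have c: "cmeas (\<lambda>E. \<mu> E - z * delta0 E)" for z
    using cmeas_lin[OF mu cmeas_delta0, where c="- z"] by simp
  have c2: "cmeas (\<lambda>E. Tshift m \<mu> E - z * delta0 E)" for z
    using cmeas_lin[OF Tshift_cmeas[OF mu] cmeas_delta0, where c="- z"] by simp
  have "cinvertible (\<lambda>E. Tshift m \<mu> E - z * delta0 E) \<longleftrightarrow> cinvertible (\<lambda>E. \<mu> E - z * delta0 E)" for z
  proof
    assume "cinvertible (\<lambda>E. \<mu> E - z * delta0 E)"
    from cinvertible_Tshift[OF c this, of m] show "cinvertible (\<lambda>E. Tshift m \<mu> E - z * delta0 E)"
      using Tshift_shift_delta[OF mu] by simp
  next
    assume "cinvertible (\<lambda>E. Tshift m \<mu> E - z * delta0 E)"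
    from cinvertible_Tshift[OF c2 this, of "-m"] have "cinvertible (Tshift (-m) (\<lambda>E. Tshift m \<mu> E - z * delta0 E))" .
    also have "Tshift (-m) (\<lambda>E. Tshift m \<mu> E - z * delta0 E) = (\<lambda>E. Tshift (-m) (Tshift m \<mu>) E - z * delta0 E)"
      by (rule Tshift_shift_delta[OF Tshift_cmeas[OF mu]])
    finally show "cinvertible (\<lambda>E. \<mu> E - z * delta0 E)" using Tshift_inv[OF mu] by simp
  qed
  then show ?thesis unfolding cspectrum_def by auto
qed

lemma NN_Tshift:
  assumes "\<nu> \<in> NN"
  shows "Tshift m \<nu> \<in> NN"
proof -
  have c: "cmeas \<nu>" using assms unfolding NN_def by auto
  show ?thesis using assms unfolding NN_def
    using Tshift_cmeas[OF c] cspectrum_Tshift[OF c] range_fourier_Tshift[OF c] by auto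
qed

lemma spec_reasonable_Tshift:
  assumes sr: "spec_reasonable \<mu>"
  shows "spec_reasonable (Tshift m \<mu>)"
proof -
  have mu: "cmeas \<mu>" using sr unfolding spec_reasonable_def by auto
  show ?thesis unfolding spec_reasonable_def
  proof (intro conjI ballI)
    show "cmeas (Tshift m \<mu>)" by (rule Tshift_cmeas[OF mu])
    fix \<nu> assume \<nu>: "\<nu> \<in> NN"
    have c: "cmeas \<nu>" using \<nu> unfolding NN_def by auto
    have \<nu>': "Tshift (-m) \<nu> \<in> NN" by (rule NN_Tshift[OF \<nu>])
    have c': "cmeas (Tshift (-m) \<nu>)" by (rule Tshift_cmeas[OF c])
    have "(\<lambda>E. \<mu> E + Tshift (-m) \<nu> E) \<in> NN" using sr \<nu>' unfolding spec_reasonable_def by auto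
    then have "Tshift m (\<lambda>E. \<mu> E + 1 * Tshift (-m) \<nu> E) \<in> NN" using NN_Tshift by simp
    also have "Tshift m (\<lambda>E. \<mu> E + 1 * Tshift (-m) \<nu> E) = (\<lambda>E. Tshift m \<mu> E + 1 * Tshift m (Tshift (-m) \<nu>) E)"
      by (rule Tshift_lin[OF mu c'])
    also have "Tshift m (Tshift (-m) \<nu>) = \<nu>" using Tshift_inv[OF c, of "-m"] by simp
    finally show "(\<lambda>E. Tshift m \<mu> E + \<nu> E) \<in> NN" by simp
  qed
qed

theorem mainTheorem17:
  assumes "cmeas \<mu>"
  shows "spec_reasonable \<mu> \<longleftrightarrow> (\<forall>m::int. spec_reasonable (Tshift m \<mu>))"
proof
  assume "spec_reasonable \<mu>" then show "\<forall>m::int. spec_reasonable (Tshift m \<mu>)" using spec_reasonable_Tshift by blast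
next
  assume "\<forall>m::int. spec_reasonable (Tshift m \<mu>)"
  then have "spec_reasonable (Tshift 0 \<mu>)" by blast
  then show "spec_reasonable \<mu>" using Tshift_0[OF assms] by simp
qed

end
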